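(* The horizontal monoidal category $H(\mathsf{sInst})$ of the double category of simplicial instruments can be identified with the monoidal category $(\mathsf{Chan},\otimes,\mathbb C)$ of finite-dimensional Hilbert spaces and channels, via the identification of simplicial instruments $\Delta^0\to\mathcal{CP}_{V,W}(\Delta^0)$ with channels $V\to W$; and the vertical monoidal category $V(\mathsf{sInst})$ can be identified with the Kleisli category $\mathsf{sSet}_D$ of the levelwise distribution monad on simplicial sets (with monoidal product given on objects by the product of simplicial sets), via the identification $\mathcal{CP}_{\mathbb C,\mathbb C}(Y)\cong D(Y)$ induced by $\operatorname{CP}(\mathbb C,\mathbb C)\cong\mathbb R_{\ge0}$.
   Context: All Hilbert spaces are finite-dimensional; $\operatorname{CP}(V,W)$ denotes completely positive maps $L(V)\to L(W)$ and channels are trace-preserving ones. For a set $S$, $\mathcal{CP}_{V,W}(S)$ is the set of finitely supported $\Phi:S\to\operatorname{CP}(V,W)$ with $\sum_s\Phi^s$ a channel, functorial in $S$ by $(f_*\Phi)^t=\sum_{f(s)=t}\Phi^s$; it is extended levelwise to simplicial sets. A simplicial instrument is a simplicial map $\Phi:X\to\mathcal{CP}_{V,W}(Y)$. The double category $\mathsf{sInst}$ has one object, vertical morphisms Hilbert spaces, horizontal morphisms simplicial sets, and squares (with horizontal boundaries $X$ above, $Y$ below, vertical boundaries $V$, $W$) the simplicial instruments $X\to\mathcal{CP}_{V,W}(Y)$. Horizontal composition: for $\Phi:X_1\to\mathcal{CP}_{V,W}(Y_1)$, $\Psi:X_2\to\mathcal{CP}_{W,U}(Y_2)$, $(\Psi\circ\Phi)_{(x_1,x_2)}^{(y_1,y_2)}=\Psi_{x_2}^{y_2}\circ\Phi_{x_1}^{y_1}$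 on $X_1\times X_2\to\mathcal{CP}_{V,U}(Y_1\times Y_2)$. Vertical composition: for $\Phi:X\to\mathcal{CP}_{V_1,W_1}(Y)$, $\Psi:Y\to\mathcal{CP}_{V_2,W_2}(Z)$, $(\Psi\bullet\Phi)_x^z=\sum_{y\in Y_n}\Phi_x^y\otimes\Psi_y^z$. The horizontal identity is the terminal simplicial set $\Delta^0$ (one simplex in each degree), and the vertical identity is $\mathbb C$. The horizontal monoidal category $H(\mathsf{sInst})$ has objects the Hilbert spaces, morphisms $V\to W$ the squares with both horizontal boundaries $\Delta^0$, composition by horizontal composition and tensor product by vertical composition. The vertical monoidal category $V(\mathsf{sInst})$ has objects simplicial sets, morphisms $X\to Y$ the squares with both vertical boundaries $\mathbb C$, composition by vertical composition and tensor product by horizontal composition. $D$ is the distribution monad ($D(S)$ = finitely supported probability distributions on $S$) applied levelwise to simplicial sets; $\mathsf{sSet}_D$ is its Kleisli category, with objects simplicial sets and morphisms simplicial maps $X\to D(Y)$. *)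

theory Defs
  imports Complex_Main "HOL-Library.Function_Algebras" "HOL-Library.FuncSet"
    "HOL-Probability.Probability_Mass_Function"
begin

text \<open>A finite-dimensional Hilbert space is represented (up to unitary isomorphism) by its
dimension n, i.e. by C^n.  An operator in L(C^n) is a function nat => nat => complex that
vanishes outside the index range {0..<n} x {0..<n}.  A linear map L(C^V) -> L(C^W)
(a superoperator) is a function on such matrices, normalised so that it only depends on
the truncation of its argument to V x V and always returns an element of L(C^W).\<close>

type_synonym cmat = "nat \<Rightarrow> nat \<Rightarrow> complex"
type_synonym sop = "cmat \<Rightarrow> cmat"

definition mats :: "nat \<Rightarrow> cmat set" where
  "mats n = {M. \<forall>i j. (n \<le> i \<or> n \<le> j) \<longrightarrow> M i j = 0}"

definition trunc :: "nat \<Rightarrow> cmat \<Rightarrow> cmat" where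
  "trunc n M = (\<lambda>i j. if i < n \<and> j < n then M i j else 0)"

definition smul :: "complex \<Rightarrow> cmat \<Rightarrow> cmat" where
  "smul c M = (\<lambda>i j. c * M i j)"

definition superop :: "nat \<Rightarrow> nat \<Rightarrow> sop \<Rightarrow> bool" where
  "superop V W \<Phi> \<longleftrightarrow> (\<forall>M. \<Phi> M \<in> mats W) \<and> (\<forall>M. \<Phi> M = \<Phi> (trunc V M))
     \<and> (\<forall>M N. \<Phi> (M + N) = \<Phi> M + \<Phi> N) \<and> (\<forall>c M. \<Phi> (smul c M) = smul c (\<Phi> M))"

definition psd :: "nat \<Rightarrow> cmat \<Rightarrow> bool" where
  "psd n M \<longleftrightarrow> M \<in> mats n \<and>
     (\<forall>v :: nat \<Rightarrow> complex. let q = (\<Sum>i<n. \<Sum>j<n. cnj (v i) * M i j * v j) in Im q = 0 \<and> 0 \<le> Re q)"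

text \<open>The amplification id_{L(C^k)} (x) Phi, with C^k (x) C^n identified with C^(k*n)
(index p*n + a for p < k, a < n).\<close>
definition ampl :: "nat \<Rightarrow> nat \<Rightarrow> nat \<Rightarrow> sop \<Rightarrow> sop" where
  "ampl k V W \<Phi> M = (\<lambda>i j. if i < k * W \<and> j < k * W then
       \<Phi> (\<lambda>a b. if a < V \<and> b < V then M ((i div W) * V + a) ((j div W) * V + b) else 0)
         (i mod W) (j mod W) else 0)"

definition CP :: "nat \<Rightarrow> nat \<Rightarrow> sop \<Rightarrow> bool" where
  "CP V W \<Phi> \<longleftrightarrow> superop V W \<Phi> \<and> (\<forall>k M. psd (k * V) M \<longrightarrow> psd (k * W) (ampl k V W \<Phi> M))"

definition tr :: "nat \<Rightarrow> cmat \<Rightarrow> complex" where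
  "tr n M = (\<Sum>i<n. M i i)"

definition channel :: "nat \<Rightarrow> nat \<Rightarrow> sop \<Rightarrow> bool" where
  "channel V W \<Phi> \<longleftrightarrow> CP V W \<Phi> \<and> (\<forall>M \<in> mats V. tr W (\<Phi> M) = tr V M)"

text \<open>Kronecker product of operators: C^n (x) C^m = C^(n*m), index a*m + c.\<close>
definition kron :: "nat \<Rightarrow> nat \<Rightarrow> cmat \<Rightarrow> cmat \<Rightarrow> cmat" where
  "kron n m A B = (\<lambda>i j. if i < n * m \<and> j < n * m
       then A (i div m) (j div m) * B (i mod m) (j mod m) else 0)"

definition unitmat :: "nat \<Rightarrow> nat \<Rightarrow> cmat" where
  "unitmat a b = (\<lambda>i j. if i = a \<and> j = b then 1 else 0)"

text \<open>Tensor product of superoperators Phi : L(C^V1) -> L(C^W1), Psi : L(C^V2) -> L(C^W2):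
the unique linear map with (Phi (x) Psi)(A (x) B) = Phi A (x) Psi B.\<close>
definition stensor :: "nat \<Rightarrow> nat \<Rightarrow> nat \<Rightarrow> nat \<Rightarrow> sop \<Rightarrow> sop \<Rightarrow> sop" where
  "stensor V1 W1 V2 W2 \<Phi> \<Psi> M =
     (\<Sum>a<V1. \<Sum>b<V1. \<Sum>c<V2. \<Sum>d<V2.
        smul (M (a * V2 + c) (b * V2 + d)) (kron W1 W2 (\<Phi> (unitmat a b)) (\<Psi> (unitmat c d))))"

text \<open>A simplicial set with simplices drawn from a type 'a: the sets X_n, faces
d^n_i : X_n -> X_(n-1) (n >= 1, i <= n) and degeneracies s^n_i : X_n -> X_(n+1) (i <= n).\<close>
record 'a sset =
  simp :: "nat \<Rightarrow> 'a set"
  face :: "nat \<Rightarrow> nat \<Rightarrow> 'a \<Rightarrow> 'a"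
  degen :: "nat \<Rightarrow> nat \<Rightarrow> 'a \<Rightarrow> 'a"

definition is_sset :: "'a sset \<Rightarrow> bool" where
  "is_sset X \<longleftrightarrow>
    (\<forall>n i x. 1 \<le> n \<and> i \<le> n \<and> x \<in> simp X n \<longrightarrow> face X n i x \<in> simp X (n - 1)) \<and>
    (\<forall>n i x. i \<le> n \<and> x \<in> simp X n \<longrightarrow> degen X n i x \<in> simp X (Suc n)) \<and>
    (\<forall>n i j x. 2 \<le> n \<and> i < j \<and> j \<le> n \<and> x \<in> simp X n \<longrightarrow>
       face X (n - 1) i (face X n j x) = face X (n - 1) (j - 1) (face X n i x)) \<and>
    (\<forall>n i j x. 1 \<le> n \<and> i < j \<and> j \<le> n \<and> x \<in> simp X n \<longrightarrow>
       face X (Suc n) i (degen X n j x) = degen X (n - 1) (j - 1) (face X n i x)) \<and>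
    (\<forall>n j x. j \<le> n \<and> x \<in> simp X n \<longrightarrow>
       face X (Suc n) j (degen X n j x) = x \<and> face X (Suc n) (Suc j) (degen X n j x) = x) \<and>
    (\<forall>n i j x. 1 \<le> n \<and> Suc j < i \<and> i \<le> Suc n \<and> x \<in> simp X n \<longrightarrow>
       face X (Suc n) i (degen X n j x) = degen X (n - 1) j (face X n (i - 1) x)) \<and>
    (\<forall>n i j x. i \<le> j \<and> j \<le> n \<and> x \<in> simp X n \<longrightarrow>
       degen X (Suc n) i (degen X n j x) = degen X (Suc n) (Suc j) (degen X n i x))"

definition Delta0 :: "unit sset" where
  "Delta0 = \<lparr>simp = (\<lambda>n. UNIV), face = (\<lambda>n i x. ()), degen = (\<lambda>n i x. ())\<rparr>"

definition sprod :: "'a sset \<Rightarrow> 'b sset \<Rightarrow> ('a \<times> 'b) sset" where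
  "sprod X Y = \<lparr>simp = (\<lambda>n. simp X n \<times> simp Y n),
     face = (\<lambda>n i (x, y). (face X n i x, face Y n i y)),
     degen = (\<lambda>n i (x, y). (degen X n i x, degen Y n i y))\<rparr>"

definition CPfam :: "nat \<Rightarrow> nat \<Rightarrow> 'b set \<Rightarrow> ('b \<Rightarrow> sop) set" where
  "CPfam V W S = {\<Phi>. finite {s. \<Phi> s \<noteq> 0} \<and> {s. \<Phi> s \<noteq> 0} \<subseteq> S \<and>
       (\<forall>s. CP V W (\<Phi> s)) \<and> channel V W (\<Sum>s | \<Phi> s \<noteq> 0. \<Phi> s)}"

definition push :: "('b \<Rightarrow> 'c) \<Rightarrow> ('b \<Rightarrow> sop) \<Rightarrow> 'c \<Rightarrow> sop" where
  "push f \<Phi> t = (\<Sum>s | \<Phi> s \<noteq> 0 \<and> f s = t. \<Phi> s)"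

text \<open>Simplicial instruments X -> CP_{V,W}(Y), i.e. simplicial maps; as usual for
functions on a carrier, the value outside X_n is fixed to undefined.\<close>
definition sinst :: "nat \<Rightarrow> nat \<Rightarrow> 'a sset \<Rightarrow> 'b sset \<Rightarrow> (nat \<Rightarrow> 'a \<Rightarrow> 'b \<Rightarrow> sop) set" where
  "sinst V W X Y = {\<Phi>.
     (\<forall>n. \<Phi> n \<in> extensional (simp X n)) \<and>
     (\<forall>n x. x \<in> simp X n \<longrightarrow> \<Phi> n x \<in> CPfam V W (simp Y n)) \<and>
     (\<forall>n i x. 1 \<le> n \<and> i \<le> n \<and> x \<in> simp X n \<longrightarrow>
        \<Phi> (n - 1) (face X n i x) = push (face Y n i) (\<Phi> n x)) \<and>
     (\<forall>n i x. i \<le> n \<and> x \<in> simp X n \<longrightarrow>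
        \<Phi> (Suc n) (degen X n i x) = push (degen Y n i) (\<Phi> n x))}"

text \<open>Horizontal composition of squares (product of horizontal boundaries).\<close>
definition hcomp :: "'a1 sset \<Rightarrow> 'a2 sset \<Rightarrow> (nat \<Rightarrow> 'a1 \<Rightarrow> 'b1 \<Rightarrow> sop) \<Rightarrow> (nat \<Rightarrow> 'a2 \<Rightarrow> 'b2 \<Rightarrow> sop)
     \<Rightarrow> nat \<Rightarrow> 'a1 \<times> 'a2 \<Rightarrow> 'b1 \<times> 'b2 \<Rightarrow> sop" where
  "hcomp X1 X2 \<Phi> \<Psi> n = (\<lambda>(x1, x2) \<in> simp X1 n \<times> simp X2 n.
      \<lambda>(y1, y2). \<Psi> n x2 y2 \<circ> \<Phi> n x1 y1)"

text \<open>Vertical composition of squares (tensor product of vertical boundaries).\<close>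
definition vcomp :: "nat \<Rightarrow> nat \<Rightarrow> nat \<Rightarrow> nat \<Rightarrow> 'a sset \<Rightarrow> (nat \<Rightarrow> 'a \<Rightarrow> 'b \<Rightarrow> sop)
     \<Rightarrow> (nat \<Rightarrow> 'b \<Rightarrow> 'c \<Rightarrow> sop) \<Rightarrow> nat \<Rightarrow> 'a \<Rightarrow> 'c \<Rightarrow> sop" where
  "vcomp V1 W1 V2 W2 X \<Phi> \<Psi> n = (\<lambda>x \<in> simp X n. \<lambda>z.
      \<Sum>y | \<Phi> n x y \<noteq> 0. stensor V1 W1 V2 W2 (\<Phi> n x y) (\<Psi> n y z))"

text \<open>Horizontal identity square on the vertical morphism V (boundaries Delta^0).\<close>
definition hid :: "nat \<Rightarrow> nat \<Rightarrow> unit \<Rightarrow> unit \<Rightarrow> sop" where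
  "hid V = (\<lambda>n x y. trunc V)"

text \<open>Vertical identity square on the horizontal morphism X (vertical boundaries C).\<close>
definition vid :: "'a sset \<Rightarrow> nat \<Rightarrow> 'a \<Rightarrow> 'a \<Rightarrow> sop" where
  "vid X n = (\<lambda>x \<in> simp X n. \<lambda>y. if y = x then trunc 1 else 0)"

definition Dset :: "'b set \<Rightarrow> 'b pmf set" where
  "Dset S = {p. finite (set_pmf p) \<and> set_pmf p \<subseteq> S}"

definition kmaps :: "'a sset \<Rightarrow> 'b sset \<Rightarrow> (nat \<Rightarrow> 'a \<Rightarrow> 'b pmf) set" where
  "kmaps X Y = {f.
     (\<forall>n. f n \<in> extensional (simp X n)) \<and>
     (\<forall>n x. x \<in> simp X n \<longrightarrow> f n x \<in> Dset (simp Y n)) \<and>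
     (\<forall>n i x. 1 \<le> n \<and> i \<le> n \<and> x \<in> simp X n \<longrightarrow>
        f (n - 1) (face X n i x) = map_pmf (face Y n i) (f n x)) \<and>
     (\<forall>n i x. i \<le> n \<and> x \<in> simp X n \<longrightarrow>
        f (Suc n) (degen X n i x) = map_pmf (degen Y n i) (f n x))}"

definition kcomp :: "'a sset \<Rightarrow> (nat \<Rightarrow> 'a \<Rightarrow> 'b pmf) \<Rightarrow> (nat \<Rightarrow> 'b \<Rightarrow> 'c pmf) \<Rightarrow> nat \<Rightarrow> 'a \<Rightarrow> 'c pmf" where
  "kcomp X f g n = (\<lambda>x \<in> simp X n. bind_pmf (f n x) (g n))"

definition kid :: "'a sset \<Rightarrow> nat \<Rightarrow> 'a \<Rightarrow> 'a pmf" where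
  "kid X n = (\<lambda>x \<in> simp X n. return_pmf x)"

definition kprod :: "'a1 sset \<Rightarrow> 'a2 sset \<Rightarrow> (nat \<Rightarrow> 'a1 \<Rightarrow> 'b1 pmf) \<Rightarrow> (nat \<Rightarrow> 'a2 \<Rightarrow> 'b2 pmf)
     \<Rightarrow> nat \<Rightarrow> 'a1 \<times> 'a2 \<Rightarrow> ('b1 \<times> 'b2) pmf" where
  "kprod X1 X2 f g n = (\<lambda>(x1, x2) \<in> simp X1 n \<times> simp X2 n. pair_pmf (f n x1) (g n x2))"

text \<open>Simplicial instruments Delta^0 -> CP_{V,W}(Delta^0) give channels V -> W
(the value on the unique simplex; by simpliciality all levels agree).\<close>
definition chan_of :: "(nat \<Rightarrow> unit \<Rightarrow> unit \<Rightarrow> sop) \<Rightarrow> sop" where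
  "chan_of \<Phi> = \<Phi> 0 () ()"

text \<open>CP(C,C) = R_{>=0} via Phi |-> Phi(1); this induces CP_{C,C}(Y) = D(Y).\<close>
definition scalar_of :: "sop \<Rightarrow> real" where
  "scalar_of \<Phi> = Re (\<Phi> (unitmat 0 0) 0 0)"

definition dist_of :: "'a sset \<Rightarrow> (nat \<Rightarrow> 'a \<Rightarrow> 'b \<Rightarrow> sop) \<Rightarrow> nat \<Rightarrow> 'a \<Rightarrow> 'b pmf" where
  "dist_of X \<Phi> n = (\<lambda>x \<in> simp X n. embed_pmf (\<lambda>y. scalar_of (\<Phi> n x y)))"

end

theory Submission
  imports Defs
begin


lemma sum_fun_apply: "(sum f A) x = sum (\<lambda>a. f a x) A"
  by (induct A rule: infinite_finite_induct) auto

lemma superop_zero: "superop V W \<phi> \<Longrightarrow> \<phi> 0 = 0"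
proof -
  assume "superop V W \<phi>"
  then have "\<phi> (0 + 0) = \<phi> 0 + \<phi> 0" unfolding superop_def by blast
  then show ?thesis by simp
qed

lemma superop_sum: "superop V W \<phi> \<Longrightarrow> \<phi> (sum f A) = (\<Sum>a\<in>A. \<phi> (f a))"
proof (induct A rule: infinite_finite_induct)
  case (infinite A) then show ?case by (metis sum.infinite superop_zero)
next
  case empty then show ?case by (metis sum.empty superop_zero)
next
  case (insert x F)
  then have "\<phi> (f x + sum f F) = \<phi> (f x) + \<phi> (sum f F)" unfolding superop_def by blast
  moreover have "sum f (insert x F) = f x + sum f F" using insert(1,2) by (rule sum.insert)
  moreover have "(\<Sum>a\<in>insert x F. \<phi> (f a)) = \<phi> (f x) + (\<Sum>a\<in>F. \<phi> (f a))" using insert(1,2) by (rule sum.insert)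
  ultimately show ?case using insert(3,4) by metis
qed

lemma trunc_expand: "trunc V X = (\<Sum>a<V. \<Sum>b<V. smul (X a b) (unitmat a b))"
proof (rule ext, rule ext)
  fix i j
  have "(\<Sum>a<V. \<Sum>b<V. smul (X a b) (unitmat a b)) i j = (\<Sum>a<V. \<Sum>b<V. X a b * (if i = a \<and> j = b then 1 else 0))"
    by (simp add: sum_fun_apply smul_def unitmat_def)
  also have "\<dots> = (\<Sum>a<V. if a = i then (if j < V then X a j else 0) else 0)"
  proof (rule sum.cong[OF refl])
    fix a show "(\<Sum>b<V. X a b * (if i = a \<and> j = b then 1 else 0)) = (if a = i then (if j < V then X a j else 0) else 0)"
      by (cases "a = i") (auto simp: sum.delta' if_distrib cong: if_cong)
  qed
  also have "\<dots> = (if i < V \<and> j < V then X i j else 0)"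
    by (simp add: sum.delta')
  finally show "trunc V X i j = (\<Sum>a<V. \<Sum>b<V. smul (X a b) (unitmat a b)) i j"
    by (simp add: trunc_def)
qed

lemma superop_expand:
  assumes "superop V W \<phi>"
  shows "\<phi> X i j = (\<Sum>a<V. \<Sum>b<V. X a b * \<phi> (unitmat a b) i j)"
proof -
  have "\<phi> X = \<phi> (trunc V X)" using assms unfolding superop_def by blast
  also have "\<dots> = (\<Sum>a<V. \<Sum>b<V. \<phi> (smul (X a b) (unitmat a b)))"
    by (simp add: trunc_expand superop_sum[OF assms])
  also have "\<dots> = (\<Sum>a<V. \<Sum>b<V. smul (X a b) (\<phi> (unitmat a b)))"
    using assms unfolding superop_def by simp
  finally show ?thesis by (simp add: sum_fun_apply smul_def)
qed



definition qf :: "nat \<Rightarrow> cmat \<Rightarrow> (nat \<Rightarrow> complex) \<Rightarrow> complex" where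
  "qf n M v = (\<Sum>i<n. \<Sum>j<n. cnj (v i) * M i j * v j)"

definition nnc :: "complex \<Rightarrow> bool" where
  "nnc z \<longleftrightarrow> Im z = 0 \<and> 0 \<le> Re z"

lemma psd_qf: "psd n M \<longleftrightarrow> M \<in> mats n \<and> (\<forall>v. nnc (qf n M v))"
  unfolding psd_def qf_def nnc_def Let_def by simp

lemma nnc_cnj_mult: "nnc (cnj z * z)"
proof -
  have "cnj z * z = complex_of_real ((cmod z)^2)" by (simp add: complex_norm_square mult.commute del: of_real_power)
  then show ?thesis by (simp add: nnc_def)
qed

lemma psd_unit: "psd 1 (unitmat 0 0)"
  unfolding psd_qf
proof (intro conjI allI)
  show "unitmat 0 0 \<in> mats 1" by (auto simp: mats_def unitmat_def)
  fix v
  have "qf 1 (unitmat 0 0) v = cnj (v 0) * v 0" by (simp add: qf_def unitmat_def)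
  then show "nnc (qf 1 (unitmat 0 0) v)" by (simp add: nnc_cnj_mult)
qed



definition sc :: "complex \<Rightarrow> sop" where
  "sc c = (\<lambda>M i j. if i = 0 \<and> j = 0 then c * M 0 0 else 0)"

lemma sc_apply: "sc c M i j = (if i = 0 \<and> j = 0 then c * M 0 0 else 0)"
  by (simp add: sc_def)

lemma sc_inj: "sc a = sc b \<Longrightarrow> a = b"
proof -
  assume "sc a = sc b"
  then have "sc a (unitmat 0 0) 0 0 = sc b (unitmat 0 0) 0 0" by simp
  then show ?thesis by (simp add: sc_def unitmat_def)
qed

lemma sc_eq0: "sc c = 0 \<longleftrightarrow> c = 0"
proof
  assume "sc c = 0"
  then have "sc c (unitmat 0 0) 0 0 = 0" by simp
  then show "c = 0" by (simp add: sc_def unitmat_def)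
qed (simp add: sc_def fun_eq_iff)

lemma sc_sum: "(\<Sum>s\<in>A. sc (f s)) = sc (\<Sum>s\<in>A. f s)"
  by (induct A rule: infinite_finite_induct) (auto simp: sc_def fun_eq_iff distrib_right)

lemma sc_comp: "sc a \<circ> sc b = sc (b * a)"
  by (auto simp: sc_def fun_eq_iff)

lemma trunc1_sc: "trunc 1 = sc 1"
  by (auto simp: sc_def trunc_def fun_eq_iff)

lemma scalar_of_sc: "scalar_of (sc c) = Re c"
  by (simp add: scalar_of_def sc_def unitmat_def)

lemma stensor_sc: "stensor 1 1 1 1 (sc a) (sc b) = sc (a * b)"
  by (auto simp: stensor_def sc_def fun_eq_iff kron_def smul_def unitmat_def)

lemma superop_sc: "superop 1 1 (sc c)"
  by (auto simp: superop_def sc_def mats_def trunc_def smul_def fun_eq_iff algebra_simps)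

lemma ampl_1: "ampl k 1 1 \<phi> M i j = (if i < k \<and> j < k then \<phi> (\<lambda>a b. if a = 0 \<and> b = 0 then M i j else 0) 0 0 else 0)"
proof -
  have "(\<lambda>a b. if a < 1 \<and> b < 1 then M ((i div 1) * 1 + a) ((j div 1) * 1 + b) else 0)
      = (\<lambda>a b. if a = 0 \<and> b = 0 then M i j else 0)" by (auto simp: fun_eq_iff)
  then show ?thesis unfolding ampl_def by simp
qed

lemma CP1_sc:
  assumes "CP 1 1 \<phi>"
  shows "\<phi> = sc (complex_of_real (scalar_of \<phi>))" "0 \<le> scalar_of \<phi>"
proof -
  have so: "superop 1 1 \<phi>" using assms by (simp add: CP_def)
  have ps: "psd 1 (unitmat 0 0)" by (rule psd_unit)
  then have "psd (1*1) (ampl 1 1 1 \<phi> (unitmat 0 0))"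
    using conjunct2[OF assms[unfolded CP_def], rule_format, of 1 "unitmat 0 0"] by simp
  then have "nnc (qf 1 (ampl 1 1 1 \<phi> (unitmat 0 0)) (\<lambda>_. 1))" by (simp add: psd_qf)
  moreover have "qf 1 (ampl 1 1 1 \<phi> (unitmat 0 0)) (\<lambda>_. 1) = \<phi> (unitmat 0 0) 0 0"
  proof -
    have "ampl 1 1 1 \<phi> (unitmat 0 0) 0 0 = \<phi> (unitmat 0 0) 0 0"
    proof -
      have e: "(\<lambda>a b. if a = 0 \<and> b = 0 then unitmat 0 0 0 0 else 0) = unitmat 0 0" by (auto simp: unitmat_def fun_eq_iff)
      have "ampl 1 1 1 \<phi> (unitmat 0 0) 0 0 = (if 0 < (1::nat) \<and> 0 < (1::nat) then \<phi> (\<lambda>a b. if a = 0 \<and> b = 0 then unitmat 0 0 0 0 else 0) 0 0 else 0)"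
        by (rule ampl_1)
      then show ?thesis by (simp only: e) simp
    qed
    then show ?thesis by (simp add: qf_def)
  qed
  ultimately have nn: "nnc (\<phi> (unitmat 0 0) 0 0)" by simp
  then have eq: "\<phi> (unitmat 0 0) 0 0 = complex_of_real (scalar_of \<phi>)"
    by (simp add: nnc_def scalar_of_def complex_eq_iff)
  show "0 \<le> scalar_of \<phi>" using nn by (simp add: nnc_def scalar_of_def)
  have m: "\<phi> (unitmat 0 0) \<in> mats 1" using so by (simp add: superop_def)
  show "\<phi> = sc (complex_of_real (scalar_of \<phi>))"
  proof (rule ext, rule ext, rule ext)
    fix X i j
    have "\<phi> X i j = X 0 0 * \<phi> (unitmat 0 0) i j" using superop_expand[OF so, of X i j] by simp
    also have "\<dots> = sc (complex_of_real (scalar_of \<phi>)) X i j"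
      using m eq by (auto simp: sc_def mats_def)
    finally show "\<phi> X i j = sc (complex_of_real (scalar_of \<phi>)) X i j" .
  qed
qed

lemma CP1_sc_of_real: assumes "0 \<le> r" shows "CP 1 1 (sc (complex_of_real r))"
  unfolding CP_def
proof (intro conjI allI impI)
  show "superop 1 1 (sc (complex_of_real r))" by (rule superop_sc)
  fix k M assume ps: "psd (k * 1) M"
  have eq: "ampl k 1 1 (sc (complex_of_real r)) M = (\<lambda>i j. complex_of_real r * M i j)"
    using ps by (auto simp: ampl_def sc_def fun_eq_iff psd_def mats_def)
  show "psd (k * 1) (ampl k 1 1 (sc (complex_of_real r)) M)"
    unfolding psd_qf eq
  proof (intro conjI allI)
    show "(\<lambda>i j. complex_of_real r * M i j) \<in> mats (k * 1)" using ps by (auto simp: psd_def mats_def)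
    fix v
    have "qf (k*1) (\<lambda>i j. complex_of_real r * M i j) v = complex_of_real r * qf (k*1) M v"
      by (simp add: qf_def sum_distrib_left algebra_simps)
    moreover have "nnc (qf (k*1) M v)" using ps by (simp add: psd_qf)
    ultimately show "nnc (qf (k * 1) (\<lambda>i j. complex_of_real r * M i j) v)"
      using assms by (simp add: nnc_def)
  qed
qed

lemma channel_sc: "channel 1 1 (sc c) \<longleftrightarrow> CP 1 1 (sc c) \<and> c = 1"
proof -
  have "(\<forall>M \<in> mats 1. tr 1 (sc c M) = tr 1 M) \<longleftrightarrow> c = 1"
  proof
    assume "\<forall>M \<in> mats 1. tr 1 (sc c M) = tr 1 M"
    moreover have "unitmat 0 0 \<in> mats 1" by (auto simp: mats_def unitmat_def)
    ultimately show "c = 1" by (auto simp: tr_def sc_def unitmat_def dest!: bspec)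
  qed (simp add: tr_def sc_def)
  then show ?thesis by (simp add: channel_def)
qed

lemma channel_scD: "channel 1 1 (sc c) \<Longrightarrow> c = 1"
  using channel_sc by blast

lemma channel_sc1: "channel 1 1 (sc 1)"
  using CP1_sc_of_real[of 1] channel_sc[of 1] by simp

lemma embed_pmf_pmf: "embed_pmf (pmf p) = p"
proof (rule pmf_eqI)
  fix i
  have "(\<integral>\<^sup>+x. ennreal (pmf p x) \<partial>count_space UNIV) = 1"
    by (simp add: nn_integral_pmf)
  then show "pmf (embed_pmf (pmf p)) i = pmf p i"
    by (simp add: pmf_embed_pmf pmf_nonneg)
qed

lemma CPfam1_iff:
  "\<Phi> \<in> CPfam 1 1 S \<longleftrightarrow> (\<exists>p. finite (set_pmf p) \<and> set_pmf p \<subseteq> S \<and> \<Phi> = (\<lambda>s. sc (complex_of_real (pmf p s))))"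
proof
  assume a: "\<Phi> \<in> CPfam 1 1 S"
  define w where "w s = scalar_of (\<Phi> s)" for s
  have cp: "\<And>s. CP 1 1 (\<Phi> s)" using a by (simp add: CPfam_def)
  have Phi: "\<Phi> = (\<lambda>s. sc (complex_of_real (w s)))"
    using CP1_sc(1)[OF cp] by (auto simp: w_def)
  have wnn: "\<And>s. 0 \<le> w s" using CP1_sc(2)[OF cp] by (simp add: w_def)
  have supp: "{s. \<Phi> s \<noteq> 0} = {s. w s \<noteq> 0}" by (simp add: Phi sc_eq0)
  have fin: "finite {s. w s \<noteq> 0}" and sub: "{s. w s \<noteq> 0} \<subseteq> S"
    using a supp by (auto simp: CPfam_def)
  have "channel 1 1 (\<Sum>s | \<Phi> s \<noteq> 0. \<Phi> s)" using a by (simp add: CPfam_def)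
  then have "channel 1 1 (sc (complex_of_real (\<Sum>s | w s \<noteq> 0. w s)))"
    by (simp only: supp) (simp add: Phi sc_sum)
  then have "complex_of_real (\<Sum>s | w s \<noteq> 0. w s) = 1" by (rule channel_scD)
  then have sum1: "(\<Sum>s | w s \<noteq> 0. w s) = 1" by (simp only: of_real_eq_1_iff)
  have int1: "(\<integral>\<^sup>+x. ennreal (w x) \<partial>count_space UNIV) = 1"
    using fin sum1 wnn by (subst nn_integral_count_space'[of "{s. w s \<noteq> 0}"]) auto
  define p where "p = embed_pmf w"
  have pw: "pmf p = w" using pmf_embed_pmf[of w, OF wnn int1] by (auto simp: p_def)
  have "set_pmf p = {s. w s \<noteq> 0}" by (auto simp: set_pmf_iff pw)
  then show "\<exists>p. finite (set_pmf p) \<and> set_pmf p \<subseteq> S \<and> \<Phi> = (\<lambda>s. sc (complex_of_real (pmf p s)))"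
    using fin sub by (intro exI[of _ p]) (simp add: Phi pw)
next
  assume "\<exists>p. finite (set_pmf p) \<and> set_pmf p \<subseteq> S \<and> \<Phi> = (\<lambda>s. sc (complex_of_real (pmf p s)))"
  then obtain p where fin: "finite (set_pmf p)" and sub: "set_pmf p \<subseteq> S"
    and Phi: "\<Phi> = (\<lambda>s. sc (complex_of_real (pmf p s)))" by blast
  have supp: "{s. \<Phi> s \<noteq> 0} = set_pmf p" by (auto simp: Phi sc_eq0 set_pmf_iff)
  have sum: "(\<Sum>s\<in>set_pmf p. \<Phi> s) = sc 1"
    using sum_pmf_eq_1[OF fin subset_refl] by (simp add: Phi sc_sum flip: of_real_sum)
  have ch: "channel 1 1 (sc 1)" by (rule channel_sc1)
  have cps: "\<And>s. CP 1 1 (\<Phi> s)" unfolding Phi by (rule CP1_sc_of_real[OF pmf_nonneg])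
  show "\<Phi> \<in> CPfam 1 1 S"
    unfolding CPfam_def mem_Collect_eq supp sum
    using fin sub ch cps by blast
qed




definition inst_of :: "'a sset \<Rightarrow> (nat \<Rightarrow> 'a \<Rightarrow> 'b pmf) \<Rightarrow> nat \<Rightarrow> 'a \<Rightarrow> 'b \<Rightarrow> sop" where
  "inst_of X f n = (\<lambda>x\<in>simp X n. \<lambda>y. sc (complex_of_real (pmf (f n x) y)))"

lemma push_pmf:
  assumes "finite (set_pmf p)"
  shows "push g (\<lambda>s. sc (complex_of_real (pmf p s))) = (\<lambda>t. sc (complex_of_real (pmf (map_pmf g p) t)))"
proof
  fix t
  have set: "{s. sc (complex_of_real (pmf p s)) \<noteq> 0 \<and> g s = t} = set_pmf p \<inter> g -` {t}"
    by (auto simp: sc_eq0 set_pmf_iff)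
  have "pmf (map_pmf g p) t = measure p (g -` {t} \<inter> set_pmf p)"
    by (simp add: pmf_map measure_Int_set_pmf)
  also have "\<dots> = (\<Sum>s\<in>set_pmf p \<inter> g -` {t}. pmf p s)"
    using assms by (simp add: measure_measure_pmf_finite Int_commute)
  finally have "pmf (map_pmf g p) t = (\<Sum>s\<in>set_pmf p \<inter> g -` {t}. pmf p s)" .
  then show "push g (\<lambda>s. sc (complex_of_real (pmf p s))) t = sc (complex_of_real (pmf (map_pmf g p) t))"
    unfolding push_def set by (simp add: sc_sum)
qed

lemma sc_pmf_inj:
  assumes "(\<lambda>t. sc (complex_of_real (pmf p t))) = (\<lambda>t. sc (complex_of_real (pmf q t)))"
  shows "p = q"
proof (rule pmf_eqI)
  fix i
  from assms have "sc (complex_of_real (pmf p i)) = sc (complex_of_real (pmf q i))" by metis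
  then show "pmf p i = pmf q i" by (metis sc_inj of_real_eq_iff)
qed

lemma sinst1_at:
  assumes "\<Phi> \<in> sinst 1 1 X Y" "x \<in> simp X n"
  shows "finite (set_pmf (dist_of X \<Phi> n x)) \<and> set_pmf (dist_of X \<Phi> n x) \<subseteq> simp Y n \<and>
         \<Phi> n x = (\<lambda>y. sc (complex_of_real (pmf (dist_of X \<Phi> n x) y)))"
proof -
  have "\<Phi> n x \<in> CPfam 1 1 (simp Y n)" using assms by (simp add: sinst_def)
  then obtain p where fin: "finite (set_pmf p)" and sub: "set_pmf p \<subseteq> simp Y n"
    and P: "\<Phi> n x = (\<lambda>s. sc (complex_of_real (pmf p s)))" unfolding CPfam1_iff by blast
  have "dist_of X \<Phi> n x = embed_pmf (\<lambda>y. scalar_of (\<Phi> n x y))"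
    using assms(2) by (simp add: dist_of_def)
  also have "\<dots> = p" by (simp add: P scalar_of_sc embed_pmf_pmf)
  finally show ?thesis using fin sub P by simp
qed

lemma sinst1_inst:
  assumes "\<Phi> \<in> sinst 1 1 X Y"
  shows "inst_of X (dist_of X \<Phi>) = \<Phi>"
proof (rule ext, rule ext)
  fix n x
  show "inst_of X (dist_of X \<Phi>) n x = \<Phi> n x"
  proof (cases "x \<in> simp X n")
    case True
    have e: "inst_of X (dist_of X \<Phi>) n x = (\<lambda>y. sc (complex_of_real (pmf (dist_of X \<Phi> n x) y)))"
      using True by (simp add: inst_of_def)
    have c: "\<Phi> n x = (\<lambda>y. sc (complex_of_real (pmf (dist_of X \<Phi> n x) y)))"
      using sinst1_at[OF assms True] by blast
    show ?thesis by (rule trans[OF e sym[OF c]])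
  next
    case False
    have "\<Phi> n \<in> extensional (simp X n)" using assms by (simp add: sinst_def)
    with False show ?thesis by (simp add: inst_of_def extensional_def)
  qed
qed

lemma is_sset_face: "is_sset X \<Longrightarrow> 1 \<le> n \<Longrightarrow> i \<le> n \<Longrightarrow> x \<in> simp X n \<Longrightarrow> face X n i x \<in> simp X (n - 1)"
proof -
  assume a: "is_sset X" "1 \<le> n" "i \<le> n" "x \<in> simp X n"
  have H: "\<forall>n i x. 1 \<le> n \<and> i \<le> n \<and> x \<in> simp X n \<longrightarrow> face X n i x \<in> simp X (n - 1)"
    using a(1) unfolding is_sset_def by (rule conjunct1)
  show ?thesis by (rule H[rule_format, OF conjI[OF a(2) conjI[OF a(3) a(4)]]])
qed

lemma is_sset_degen: "is_sset X \<Longrightarrow> i \<le> n \<Longrightarrow> x \<in> simp X n \<Longrightarrow> degen X n i x \<in> simp X (Suc n)"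
proof -
  assume a: "is_sset X" "i \<le> n" "x \<in> simp X n"
  have H: "\<forall>n i x. i \<le> n \<and> x \<in> simp X n \<longrightarrow> degen X n i x \<in> simp X (Suc n)"
    using a(1) unfolding is_sset_def by (rule conjunct1[OF conjunct2])
  show ?thesis by (rule H[rule_format, OF conjI[OF a(2) a(3)]])
qed

lemma sinst1_kmaps:
  assumes "is_sset X" "\<Phi> \<in> sinst 1 1 X Y"
  shows "dist_of X \<Phi> \<in> kmaps X Y"
  unfolding kmaps_def mem_Collect_eq
proof (intro conjI allI impI)
  fix n show "dist_of X \<Phi> n \<in> extensional (simp X n)" by (simp add: dist_of_def)
next
  fix n x assume "x \<in> simp X n"
  then show "dist_of X \<Phi> n x \<in> Dset (simp Y n)" using sinst1_at[OF assms(2)] by (simp add: Dset_def)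
next
  fix n i x assume h: "1 \<le> n \<and> i \<le> n \<and> x \<in> simp X n"
  then have fx: "face X n i x \<in> simp X (n - 1)" using is_sset_face[OF assms(1)] by blast
  have "\<Phi> (n - 1) (face X n i x) = push (face Y n i) (\<Phi> n x)" using assms(2) h by (simp add: sinst_def)
  also have "\<dots> = (\<lambda>t. sc (complex_of_real (pmf (map_pmf (face Y n i) (dist_of X \<Phi> n x)) t)))"
  proof -
    have A: "\<Phi> n x = (\<lambda>y. sc (complex_of_real (pmf (dist_of X \<Phi> n x) y)))"
      and fin: "finite (set_pmf (dist_of X \<Phi> n x))" using sinst1_at[OF assms(2), of x n] h by blast+
    show ?thesis by (simp only: A) (rule push_pmf[OF fin])
  qed
  finally have C: "\<Phi> (n - 1) (face X n i x) = (\<lambda>t. sc (complex_of_real (pmf (map_pmf (face Y n i) (dist_of X \<Phi> n x)) t)))" .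
  have B: "\<Phi> (n - 1) (face X n i x) = (\<lambda>y. sc (complex_of_real (pmf (dist_of X \<Phi> (n - 1) (face X n i x)) y)))"
    using sinst1_at[OF assms(2) fx] by blast
  show "dist_of X \<Phi> (n - 1) (face X n i x) = map_pmf (face Y n i) (dist_of X \<Phi> n x)"
    by (rule sc_pmf_inj) (rule trans[OF sym[OF B] C])
next
  fix n i x assume h: "i \<le> n \<and> x \<in> simp X n"
  then have fx: "degen X n i x \<in> simp X (Suc n)" using is_sset_degen[OF assms(1)] by blast
  have "\<Phi> (Suc n) (degen X n i x) = push (degen Y n i) (\<Phi> n x)" using assms(2) h by (simp add: sinst_def)
  also have "\<dots> = (\<lambda>t. sc (complex_of_real (pmf (map_pmf (degen Y n i) (dist_of X \<Phi> n x)) t)))"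
  proof -
    have A: "\<Phi> n x = (\<lambda>y. sc (complex_of_real (pmf (dist_of X \<Phi> n x) y)))"
      and fin: "finite (set_pmf (dist_of X \<Phi> n x))" using sinst1_at[OF assms(2), of x n] h by blast+
    show ?thesis by (simp only: A) (rule push_pmf[OF fin])
  qed
  finally have C: "\<Phi> (Suc n) (degen X n i x) = (\<lambda>t. sc (complex_of_real (pmf (map_pmf (degen Y n i) (dist_of X \<Phi> n x)) t)))" .
  have B: "\<Phi> (Suc n) (degen X n i x) = (\<lambda>y. sc (complex_of_real (pmf (dist_of X \<Phi> (Suc n) (degen X n i x)) y)))"
    using sinst1_at[OF assms(2) fx] by blast
  show "dist_of X \<Phi> (Suc n) (degen X n i x) = map_pmf (degen Y n i) (dist_of X \<Phi> n x)"
    by (rule sc_pmf_inj) (rule trans[OF sym[OF B] C])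
qed

lemma kmaps_at:
  assumes "f \<in> kmaps X Y" "x \<in> simp X n"
  shows "finite (set_pmf (f n x))" "set_pmf (f n x) \<subseteq> simp Y n"
  using assms by (auto simp: kmaps_def Dset_def)

definition ssclosed :: "'a sset \<Rightarrow> bool" where
  "ssclosed X \<longleftrightarrow> (\<forall>n i x. 1 \<le> n \<and> i \<le> n \<and> x \<in> simp X n \<longrightarrow> face X n i x \<in> simp X (n - 1)) \<and>
    (\<forall>n i x. i \<le> n \<and> x \<in> simp X n \<longrightarrow> degen X n i x \<in> simp X (Suc n))"

lemma is_sset_closed: "is_sset X \<Longrightarrow> ssclosed X"
  unfolding ssclosed_def
proof (intro conjI allI impI)
  fix n i x assume "is_sset X" "1 \<le> n \<and> i \<le> n \<and> x \<in> simp X n"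
  then show "face X n i x \<in> simp X (n - 1)" by (intro is_sset_face) simp_all
next
  fix n i x assume "is_sset X" "i \<le> n \<and> x \<in> simp X n"
  then show "degen X n i x \<in> simp X (Suc n)" by (intro is_sset_degen) simp_all
qed

lemma closed_face: "ssclosed X \<Longrightarrow> 1 \<le> n \<Longrightarrow> i \<le> n \<Longrightarrow> x \<in> simp X n \<Longrightarrow> face X n i x \<in> simp X (n - 1)"
proof -
  assume a: "ssclosed X" "1 \<le> n" "i \<le> n" "x \<in> simp X n"
  have H: "\<forall>n i x. 1 \<le> n \<and> i \<le> n \<and> x \<in> simp X n \<longrightarrow> face X n i x \<in> simp X (n - 1)"
    using a(1) unfolding ssclosed_def by (rule conjunct1)
  show ?thesis by (rule H[rule_format, OF conjI[OF a(2) conjI[OF a(3) a(4)]]])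
qed

lemma closed_degen: "ssclosed X \<Longrightarrow> i \<le> n \<Longrightarrow> x \<in> simp X n \<Longrightarrow> degen X n i x \<in> simp X (Suc n)"
proof -
  assume a: "ssclosed X" "i \<le> n" "x \<in> simp X n"
  have H: "\<forall>n i x. i \<le> n \<and> x \<in> simp X n \<longrightarrow> degen X n i x \<in> simp X (Suc n)"
    using a(1) unfolding ssclosed_def by (rule conjunct2)
  show ?thesis by (rule H[rule_format, OF conjI[OF a(2) a(3)]])
qed

lemma kmaps_sinst:
  assumes "ssclosed X" "f \<in> kmaps X Y"
  shows "inst_of X f \<in> sinst 1 1 X Y"
  unfolding sinst_def mem_Collect_eq
proof (intro conjI allI impI)
  fix n show "inst_of X f n \<in> extensional (simp X n)" by (simp add: inst_of_def)
next
  fix n x assume "x \<in> simp X n"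
  then show "inst_of X f n x \<in> CPfam 1 1 (simp Y n)"
    unfolding CPfam1_iff using kmaps_at[OF assms(2)] by (intro exI[of _ "f n x"]) (auto simp: inst_of_def)
next
  fix n i x assume h: "1 \<le> n \<and> i \<le> n \<and> x \<in> simp X n"
  then have fx: "face X n i x \<in> simp X (n - 1)" using closed_face[OF assms(1)] by blast
  have "f (n - 1) (face X n i x) = map_pmf (face Y n i) (f n x)" using assms(2) h by (simp add: kmaps_def)
  then show "inst_of X f (n - 1) (face X n i x) = push (face Y n i) (inst_of X f n x)"
    using fx h kmaps_at[OF assms(2), of x n] by (simp add: inst_of_def push_pmf)
next
  fix n i x assume h: "i \<le> n \<and> x \<in> simp X n"
  then have fx: "degen X n i x \<in> simp X (Suc n)" using closed_degen[OF assms(1)] by blast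
  have "f (Suc n) (degen X n i x) = map_pmf (degen Y n i) (f n x)" using assms(2) h by (simp add: kmaps_def)
  then show "inst_of X f (Suc n) (degen X n i x) = push (degen Y n i) (inst_of X f n x)"
    using fx h kmaps_at[OF assms(2), of x n] by (simp add: inst_of_def push_pmf)
qed

lemma dist_inst:
  assumes "f \<in> kmaps X Y"
  shows "dist_of X (inst_of X f) = f"
proof (rule ext, rule ext)
  fix n x
  show "dist_of X (inst_of X f) n x = f n x"
  proof (cases "x \<in> simp X n")
    case True then show ?thesis by (simp add: dist_of_def inst_of_def scalar_of_sc embed_pmf_pmf)
  next
    case False
    have "f n \<in> extensional (simp X n)" using assms by (simp add: kmaps_def)
    with False show ?thesis by (simp add: dist_of_def extensional_def)
  qed
qed

lemma part5:
  assumes "is_sset X"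
  shows "bij_betw (dist_of X) (sinst 1 1 X Y) (kmaps X Y)"
  by (rule bij_betw_byWitness[where f' = "inst_of X"])
     (use sinst1_inst dist_inst sinst1_kmaps[OF assms] kmaps_sinst[OF is_sset_closed[OF assms]] in blast)+




lemma kcomp_at: "x \<in> simp X n \<Longrightarrow> kcomp X f g n x = bind_pmf (f n x) (g n)"
  by (simp add: kcomp_def)

lemma kcomp_kmaps:
  assumes "ssclosed X" "f \<in> kmaps X Y" "g \<in> kmaps Y Z"
  shows "kcomp X f g \<in> kmaps X Z"
  unfolding kmaps_def mem_Collect_eq
proof (intro conjI allI impI)
  fix n show "kcomp X f g n \<in> extensional (simp X n)" by (simp add: kcomp_def)
next
  fix n x assume x: "x \<in> simp X n"
  have fin: "finite (set_pmf (f n x))" and sub: "set_pmf (f n x) \<subseteq> simp Y n"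
    using kmaps_at[OF assms(2) x] by auto
  have "\<forall>y\<in>set_pmf (f n x). finite (set_pmf (g n y)) \<and> set_pmf (g n y) \<subseteq> simp Z n"
    using sub kmaps_at[OF assms(3)] by blast
  then show "kcomp X f g n x \<in> Dset (simp Z n)"
    using fin by (auto simp: Dset_def kcomp_at[OF x])
next
  fix n i x assume h: "1 \<le> n \<and> i \<le> n \<and> x \<in> simp X n"
  then have x: "x \<in> simp X n" by simp
  have fx: "face X n i x \<in> simp X (n - 1)" using closed_face[OF assms(1)] h by blast
  have ff: "f (n - 1) (face X n i x) = map_pmf (face Y n i) (f n x)" using assms(2) h by (simp add: kmaps_def)
  have sub: "set_pmf (f n x) \<subseteq> simp Y n" using kmaps_at[OF assms(2) x] by auto
  have K: "\<forall>n i x. 1 \<le> n \<and> i \<le> n \<and> x \<in> simp Y n \<longrightarrow> g (n - 1) (face Y n i x) = map_pmf (face Z n i) (g n x)"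
    using assms(3) unfolding kmaps_def mem_Collect_eq by (elim conjE) assumption
  have gg: "\<And>y. y \<in> set_pmf (f n x) \<Longrightarrow> g (n - 1) (face Y n i y) = map_pmf (face Z n i) (g n y)"
  proof -
    fix y assume "y \<in> set_pmf (f n x)"
    then have "y \<in> simp Y n" using sub by blast
    then show "g (n - 1) (face Y n i y) = map_pmf (face Z n i) (g n y)"
      using h by (intro K[rule_format]) simp
  qed
  have "kcomp X f g (n - 1) (face X n i x) = bind_pmf (map_pmf (face Y n i) (f n x)) (g (n - 1))"
    by (simp only: kcomp_at[OF fx] ff)
  also have "\<dots> = bind_pmf (f n x) (\<lambda>y. map_pmf (face Z n i) (g n y))"
    unfolding bind_map_pmf
  proof (rule bind_pmf_cong[OF refl])
    fix y assume "y \<in> set_pmf (f n x)"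
    then show "g (n - 1) (face Y n i y) = map_pmf (face Z n i) (g n y)" by (rule gg)
  qed
  also have "\<dots> = map_pmf (face Z n i) (kcomp X f g n x)"
    by (simp add: kcomp_at[OF x] map_bind_pmf)
  finally show "kcomp X f g (n - 1) (face X n i x) = map_pmf (face Z n i) (kcomp X f g n x)" .
next
  fix n i x assume h: "i \<le> n \<and> x \<in> simp X n"
  then have x: "x \<in> simp X n" by simp
  have fx: "degen X n i x \<in> simp X (Suc n)" using closed_degen[OF assms(1)] h by blast
  have ff: "f (Suc n) (degen X n i x) = map_pmf (degen Y n i) (f n x)" using assms(2) h by (simp add: kmaps_def)
  have sub: "set_pmf (f n x) \<subseteq> simp Y n" using kmaps_at[OF assms(2) x] by auto
  have K: "\<forall>n i x. i \<le> n \<and> x \<in> simp Y n \<longrightarrow> g (Suc n) (degen Y n i x) = map_pmf (degen Z n i) (g n x)"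
    using assms(3) unfolding kmaps_def mem_Collect_eq by (elim conjE) assumption
  have gg: "\<And>y. y \<in> set_pmf (f n x) \<Longrightarrow> g (Suc n) (degen Y n i y) = map_pmf (degen Z n i) (g n y)"
  proof -
    fix y assume "y \<in> set_pmf (f n x)"
    then have "y \<in> simp Y n" using sub by blast
    then show "g (Suc n) (degen Y n i y) = map_pmf (degen Z n i) (g n y)"
      using h by (intro K[rule_format]) simp
  qed
  have "kcomp X f g (Suc n) (degen X n i x) = bind_pmf (map_pmf (degen Y n i) (f n x)) (g (Suc n))"
    by (simp only: kcomp_at[OF fx] ff)
  also have "\<dots> = bind_pmf (f n x) (\<lambda>y. map_pmf (degen Z n i) (g n y))"
    unfolding bind_map_pmf
  proof (rule bind_pmf_cong[OF refl])
    fix y assume "y \<in> set_pmf (f n x)"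
    then show "g (Suc n) (degen Y n i y) = map_pmf (degen Z n i) (g n y)" by (rule gg)
  qed
  also have "\<dots> = map_pmf (degen Z n i) (kcomp X f g n x)"
    by (simp add: kcomp_at[OF x] map_bind_pmf)
  finally show "kcomp X f g (Suc n) (degen X n i x) = map_pmf (degen Z n i) (kcomp X f g n x)" .
qed

lemma vcomp_inst:
  assumes "f \<in> kmaps X Y" "g \<in> kmaps Y Z"
  shows "vcomp 1 1 1 1 X (inst_of X f) (inst_of Y g) = inst_of X (kcomp X f g)"
proof (rule ext, rule ext)
  fix n x
  show "vcomp 1 1 1 1 X (inst_of X f) (inst_of Y g) n x = inst_of X (kcomp X f g) n x"
  proof (cases "x \<in> simp X n")
    case False then show ?thesis by (simp add: vcomp_def inst_of_def)
  next
    case x: True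
    have fin: "finite (set_pmf (f n x))" and sub: "set_pmf (f n x) \<subseteq> simp Y n"
      using kmaps_at[OF assms(1) x] by auto
    have supp: "{y. inst_of X f n x y \<noteq> 0} = set_pmf (f n x)"
      using x by (auto simp: inst_of_def sc_eq0 set_pmf_iff)
    show ?thesis
    proof (rule ext)
      fix z
      have "vcomp 1 1 1 1 X (inst_of X f) (inst_of Y g) n x z =
          (\<Sum>y\<in>set_pmf (f n x). stensor 1 1 1 1 (inst_of X f n x y) (inst_of Y g n y z))"
        using x by (simp only: vcomp_def restrict_apply' supp)
      also have "\<dots> = (\<Sum>y\<in>set_pmf (f n x). sc (complex_of_real (pmf (f n x) y * pmf (g n y) z)))"
      proof (rule sum.cong[OF refl])
        fix y assume "y \<in> set_pmf (f n x)"
        then have y: "y \<in> simp Y n" using sub by blast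
        show "stensor 1 1 1 1 (inst_of X f n x y) (inst_of Y g n y z) = sc (complex_of_real (pmf (f n x) y * pmf (g n y) z))"
          using x y by (simp add: inst_of_def stensor_sc[simplified])
      qed
      also have "\<dots> = sc (complex_of_real (\<Sum>y\<in>set_pmf (f n x). pmf (f n x) y * pmf (g n y) z))"
        by (simp add: sc_sum)
      also have "(\<Sum>y\<in>set_pmf (f n x). pmf (f n x) y * pmf (g n y) z) = pmf (bind_pmf (f n x) (g n)) z"
        unfolding pmf_bind by (subst integral_measure_pmf[OF fin]) auto
      also have "sc (complex_of_real (pmf (bind_pmf (f n x) (g n)) z)) = inst_of X (kcomp X f g) n x z"
        using x by (simp add: inst_of_def kcomp_at)
      finally show "vcomp 1 1 1 1 X (inst_of X f) (inst_of Y g) n x z = inst_of X (kcomp X f g) n x z" .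
    qed
  qed
qed

lemma part6:
  assumes "is_sset X" "is_sset Y" "\<Phi> \<in> sinst 1 1 X Y" "\<Psi> \<in> sinst 1 1 Y Z"
  shows "vcomp 1 1 1 1 X \<Phi> \<Psi> \<in> sinst 1 1 X Z \<and>
      dist_of X (vcomp 1 1 1 1 X \<Phi> \<Psi>) = kcomp X (dist_of X \<Phi>) (dist_of Y \<Psi>)"
proof -
  have f: "dist_of X \<Phi> \<in> kmaps X Y" by (rule sinst1_kmaps[OF assms(1,3)])
  have g: "dist_of Y \<Psi> \<in> kmaps Y Z" by (rule sinst1_kmaps[OF assms(2,4)])
  have k: "kcomp X (dist_of X \<Phi>) (dist_of Y \<Psi>) \<in> kmaps X Z"
    by (rule kcomp_kmaps[OF is_sset_closed[OF assms(1)] f g])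
  have "vcomp 1 1 1 1 X \<Phi> \<Psi> = vcomp 1 1 1 1 X (inst_of X (dist_of X \<Phi>)) (inst_of Y (dist_of Y \<Psi>))"
    by (simp only: sinst1_inst[OF assms(3)] sinst1_inst[OF assms(4)])
  also have "\<dots> = inst_of X (kcomp X (dist_of X \<Phi>) (dist_of Y \<Psi>))"
    by (rule vcomp_inst[OF f g])
  finally have e: "vcomp 1 1 1 1 X \<Phi> \<Psi> = inst_of X (kcomp X (dist_of X \<Phi>) (dist_of Y \<Psi>))" .
  show ?thesis unfolding e
    using kmaps_sinst[OF is_sset_closed[OF assms(1)] k] dist_inst[OF k] by blast
qed

lemma kid_kmaps: assumes "ssclosed X" shows "kid X \<in> kmaps X X"
  unfolding kmaps_def mem_Collect_eq
proof (intro conjI allI impI)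
  fix n show "kid X n \<in> extensional (simp X n)" by (simp add: kid_def)
next
  fix n x assume "x \<in> simp X n" then show "kid X n x \<in> Dset (simp X n)" by (simp add: kid_def Dset_def)
next
  fix n i x assume h: "1 \<le> n \<and> i \<le> n \<and> x \<in> simp X n"
  have fx: "face X n i x \<in> simp X (n - 1)" using closed_face[OF assms(1)] h by blast
  show "kid X (n - 1) (face X n i x) = map_pmf (face X n i) (kid X n x)" using h fx by (simp add: kid_def)
next
  fix n i x assume h: "i \<le> n \<and> x \<in> simp X n"
  have fx: "degen X n i x \<in> simp X (Suc n)" using closed_degen[OF assms(1)] h by blast
  show "kid X (Suc n) (degen X n i x) = map_pmf (degen X n i) (kid X n x)" using h fx by (simp add: kid_def)
qed

lemma vid_inst: "vid X = inst_of X (kid X)"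
proof (rule ext, rule ext)
  fix n x
  show "vid X n x = inst_of X (kid X) n x"
  proof (cases "x \<in> simp X n")
    case True
    show ?thesis
    proof (rule ext)
      fix y show "vid X n x y = inst_of X (kid X) n x y"
        using True by (simp add: vid_def inst_of_def kid_def trunc1_sc[simplified] sc_eq0[of 0, simplified])
    qed
  qed (simp add: vid_def inst_of_def)
qed

lemma part7:
  assumes "is_sset X"
  shows "vid X \<in> sinst 1 1 X X \<and> dist_of X (vid X) = kid X"
  unfolding vid_inst
  using kmaps_sinst[OF is_sset_closed[OF assms] kid_kmaps[OF is_sset_closed[OF assms]]]
    dist_inst[OF kid_kmaps[OF is_sset_closed[OF assms]]] by blast


lemma kmaps_face:
  assumes "f \<in> kmaps X Y" "1 \<le> n" "i \<le> n" "x \<in> simp X n"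
  shows "f (n - 1) (face X n i x) = map_pmf (face Y n i) (f n x)"
proof -
  have K: "\<forall>n i x. 1 \<le> n \<and> i \<le> n \<and> x \<in> simp X n \<longrightarrow> f (n - 1) (face X n i x) = map_pmf (face Y n i) (f n x)"
    using assms(1) unfolding kmaps_def mem_Collect_eq by (elim conjE) assumption
  show ?thesis by (rule K[rule_format, OF conjI[OF assms(2) conjI[OF assms(3) assms(4)]]])
qed

lemma kmaps_degen:
  assumes "f \<in> kmaps X Y" "i \<le> n" "x \<in> simp X n"
  shows "f (Suc n) (degen X n i x) = map_pmf (degen Y n i) (f n x)"
proof -
  have K: "\<forall>n i x. i \<le> n \<and> x \<in> simp X n \<longrightarrow> f (Suc n) (degen X n i x) = map_pmf (degen Y n i) (f n x)"
    using assms(1) unfolding kmaps_def mem_Collect_eq by (elim conjE) assumption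
  show ?thesis by (rule K[rule_format, OF conjI[OF assms(2) assms(3)]])
qed

lemma sprod_simps:
  "simp (sprod X1 X2) n = simp X1 n \<times> simp X2 n"
  "face (sprod X1 X2) n i (x1, x2) = (face X1 n i x1, face X2 n i x2)"
  "degen (sprod X1 X2) n i (x1, x2) = (degen X1 n i x1, degen X2 n i x2)"
  by (simp_all add: sprod_def)

lemma sprod_closed:
  assumes "ssclosed X1" "ssclosed X2"
  shows "ssclosed (sprod X1 X2)"
  unfolding ssclosed_def
proof (intro conjI allI impI)
  fix n i x assume h: "1 \<le> n \<and> i \<le> n \<and> x \<in> simp (sprod X1 X2) n"
  obtain x1 x2 where x: "x = (x1, x2)" by (cases x)
  have "face X1 n i x1 \<in> simp X1 (n - 1)" using h x by (intro closed_face[OF assms(1)]) (simp_all add: sprod_simps)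
  moreover have "face X2 n i x2 \<in> simp X2 (n - 1)" using h x by (intro closed_face[OF assms(2)]) (simp_all add: sprod_simps)
  ultimately show "face (sprod X1 X2) n i x \<in> simp (sprod X1 X2) (n - 1)"
    by (simp only: x sprod_simps) blast
next
  fix n i x assume h: "i \<le> n \<and> x \<in> simp (sprod X1 X2) n"
  obtain x1 x2 where x: "x = (x1, x2)" by (cases x)
  have "degen X1 n i x1 \<in> simp X1 (Suc n)" using h x by (intro closed_degen[OF assms(1)]) (simp_all add: sprod_simps)
  moreover have "degen X2 n i x2 \<in> simp X2 (Suc n)" using h x by (intro closed_degen[OF assms(2)]) (simp_all add: sprod_simps)
  ultimately show "degen (sprod X1 X2) n i x \<in> simp (sprod X1 X2) (Suc n)"
    by (simp only: x sprod_simps) blast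
qed

lemma kprod_at: "x1 \<in> simp X1 n \<Longrightarrow> x2 \<in> simp X2 n \<Longrightarrow> kprod X1 X2 f g n (x1, x2) = pair_pmf (f n x1) (g n x2)"
  by (simp add: kprod_def)

lemma kprod_kmaps:
  assumes "ssclosed X1" "ssclosed X2" "f \<in> kmaps X1 Y1" "g \<in> kmaps X2 Y2"
  shows "kprod X1 X2 f g \<in> kmaps (sprod X1 X2) (sprod Y1 Y2)"
  unfolding kmaps_def mem_Collect_eq
proof (intro conjI allI impI)
  fix n show "kprod X1 X2 f g n \<in> extensional (simp (sprod X1 X2) n)" by (simp add: kprod_def sprod_simps)
next
  fix n x assume h: "x \<in> simp (sprod X1 X2) n"
  obtain x1 x2 where x: "x = (x1, x2)" by (cases x)
  have x1: "x1 \<in> simp X1 n" and x2: "x2 \<in> simp X2 n" using h x by (simp_all add: sprod_simps)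
  show "kprod X1 X2 f g n x \<in> Dset (simp (sprod Y1 Y2) n)"
    using kmaps_at[OF assms(3) x1] kmaps_at[OF assms(4) x2]
    by (auto simp: x kprod_at[OF x1 x2] Dset_def sprod_simps)
next
  fix n i x assume h: "1 \<le> n \<and> i \<le> n \<and> x \<in> simp (sprod X1 X2) n"
  obtain x1 x2 where x: "x = (x1, x2)" by (cases x)
  have x1: "x1 \<in> simp X1 n" and x2: "x2 \<in> simp X2 n" using h x by (simp_all add: sprod_simps)
  have f1: "face X1 n i x1 \<in> simp X1 (n - 1)" using h x1 by (intro closed_face[OF assms(1)]) simp_all
  have f2: "face X2 n i x2 \<in> simp X2 (n - 1)" using h x2 by (intro closed_face[OF assms(2)]) simp_all
  have "kprod X1 X2 f g (n - 1) (face (sprod X1 X2) n i x)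
      = pair_pmf (f (n - 1) (face X1 n i x1)) (g (n - 1) (face X2 n i x2))"
    by (simp only: x sprod_simps kprod_at[OF f1 f2])
  also have "\<dots> = pair_pmf (map_pmf (face Y1 n i) (f n x1)) (map_pmf (face Y2 n i) (g n x2))"
    using h by (simp only: kmaps_face[OF assms(3) _ _ x1] kmaps_face[OF assms(4) _ _ x2])
  also have "\<dots> = map_pmf (face (sprod Y1 Y2) n i) (kprod X1 X2 f g n x)"
    by (simp add: x kprod_at[OF x1 x2] map_pair[symmetric] sprod_def)
  finally show "kprod X1 X2 f g (n - 1) (face (sprod X1 X2) n i x) = map_pmf (face (sprod Y1 Y2) n i) (kprod X1 X2 f g n x)" .
next
  fix n i x assume h: "i \<le> n \<and> x \<in> simp (sprod X1 X2) n"
  obtain x1 x2 where x: "x = (x1, x2)" by (cases x)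
  have x1: "x1 \<in> simp X1 n" and x2: "x2 \<in> simp X2 n" using h x by (simp_all add: sprod_simps)
  have f1: "degen X1 n i x1 \<in> simp X1 (Suc n)" using h x1 by (intro closed_degen[OF assms(1)]) simp_all
  have f2: "degen X2 n i x2 \<in> simp X2 (Suc n)" using h x2 by (intro closed_degen[OF assms(2)]) simp_all
  have "kprod X1 X2 f g (Suc n) (degen (sprod X1 X2) n i x)
      = pair_pmf (f (Suc n) (degen X1 n i x1)) (g (Suc n) (degen X2 n i x2))"
    by (simp only: x sprod_simps kprod_at[OF f1 f2])
  also have "\<dots> = pair_pmf (map_pmf (degen Y1 n i) (f n x1)) (map_pmf (degen Y2 n i) (g n x2))"
    using h by (simp only: kmaps_degen[OF assms(3) _ x1] kmaps_degen[OF assms(4) _ x2])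
  also have "\<dots> = map_pmf (degen (sprod Y1 Y2) n i) (kprod X1 X2 f g n x)"
    by (simp add: x kprod_at[OF x1 x2] map_pair[symmetric] sprod_def)
  finally show "kprod X1 X2 f g (Suc n) (degen (sprod X1 X2) n i x) = map_pmf (degen (sprod Y1 Y2) n i) (kprod X1 X2 f g n x)" .
qed

lemma hcomp_inst:
  "hcomp X1 X2 (inst_of X1 f) (inst_of X2 g) = inst_of (sprod X1 X2) (kprod X1 X2 f g)"
proof (rule ext, rule ext)
  fix n x
  show "hcomp X1 X2 (inst_of X1 f) (inst_of X2 g) n x = inst_of (sprod X1 X2) (kprod X1 X2 f g) n x"
  proof -
  obtain x1 x2 where x: "x = (x1, x2)" by (cases x)
  show ?thesis
  proof (cases "x1 \<in> simp X1 n \<and> x2 \<in> simp X2 n")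
    case True
    show ?thesis
    proof (rule ext)
      fix y
      show "hcomp X1 X2 (inst_of X1 f) (inst_of X2 g) n x y = inst_of (sprod X1 X2) (kprod X1 X2 f g) n x y"
      proof -
        obtain y1 y2 where y: "y = (y1, y2)" by (cases y)
        show ?thesis
          using True by (simp add: x y hcomp_def inst_of_def sprod_simps kprod_at sc_comp pmf_pair mult.commute)
      qed
    qed
  next
    case False
    then show ?thesis by (auto simp: x hcomp_def inst_of_def sprod_simps)
  qed
qed
  qed

lemma part8:
  assumes "is_sset X1" "is_sset Y1" "is_sset X2" "is_sset Y2"
    "\<Phi> \<in> sinst 1 1 X1 Y1" "\<Psi> \<in> sinst 1 1 X2 Y2"
  shows "hcomp X1 X2 \<Phi> \<Psi> \<in> sinst 1 1 (sprod X1 X2) (sprod Y1 Y2) \<and>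
      dist_of (sprod X1 X2) (hcomp X1 X2 \<Phi> \<Psi>) = kprod X1 X2 (dist_of X1 \<Phi>) (dist_of X2 \<Psi>)"
proof -
  have f: "dist_of X1 \<Phi> \<in> kmaps X1 Y1" by (rule sinst1_kmaps[OF assms(1,5)])
  have g: "dist_of X2 \<Psi> \<in> kmaps X2 Y2" by (rule sinst1_kmaps[OF assms(3,6)])
  have c: "ssclosed (sprod X1 X2)" by (rule sprod_closed[OF is_sset_closed[OF assms(1)] is_sset_closed[OF assms(3)]])
  have k: "kprod X1 X2 (dist_of X1 \<Phi>) (dist_of X2 \<Psi>) \<in> kmaps (sprod X1 X2) (sprod Y1 Y2)"
    by (rule kprod_kmaps[OF is_sset_closed[OF assms(1)] is_sset_closed[OF assms(3)] f g])
  have "hcomp X1 X2 \<Phi> \<Psi> = hcomp X1 X2 (inst_of X1 (dist_of X1 \<Phi>)) (inst_of X2 (dist_of X2 \<Psi>))"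
    by (simp only: sinst1_inst[OF assms(5)] sinst1_inst[OF assms(6)])
  also have "\<dots> = inst_of (sprod X1 X2) (kprod X1 X2 (dist_of X1 \<Phi>) (dist_of X2 \<Psi>))"
    by (rule hcomp_inst)
  finally have e: "hcomp X1 X2 \<Phi> \<Psi> = inst_of (sprod X1 X2) (kprod X1 X2 (dist_of X1 \<Phi>) (dist_of X2 \<Psi>))" .
  show ?thesis unfolding e
    using kmaps_sinst[OF c k] dist_inst[OF k] by blast
qed




lemma idx_div: "c < (n::nat) \<Longrightarrow> (p * n + c) div n = p"
  by simp
lemma idx_mod: "c < (n::nat) \<Longrightarrow> (p * n + c) mod n = c"
  by simp
lemma idx_lt: "p < (m::nat) \<Longrightarrow> c < n \<Longrightarrow> p * n + c < m * n"
proof -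
  assume "p < m" "c < n"
  then have "p * n + c < p * n + n" by simp
  also have "\<dots> = Suc p * n" by simp
  also have "\<dots> \<le> m * n" using \<open>p < m\<close> by (intro mult_le_mono1) simp
  finally show ?thesis .
qed

lemma split_sum: "(\<Sum>i<m*n. f i) = (\<Sum>p<m. \<Sum>c<(n::nat). f (p * n + c))"
proof (induct m)
  case 0 then show ?case by simp
next
  case (Suc m)
  have "{..<Suc m * n} = {..<m * n} \<union> {m * n..<m * n + n}" by auto
  then have "(\<Sum>i<Suc m*n. f i) = (\<Sum>i<m*n. f i) + (\<Sum>i\<in>{m * n..<m * n + n}. f i)"
    by (simp add: sum.union_disjoint ivl_disj_int)
  also have "(\<Sum>i\<in>{m * n..<m * n + n}. f i) = (\<Sum>c<n. f (m * n + c))"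
  proof -
    have "(\<Sum>i\<in>{m * n..<m * n + n}. f i) = (\<Sum>c\<in>{0..<n}. f (c + m * n))"
      using sum.shift_bounds_nat_ivl[of f 0 "m*n" n] by (simp add: add.commute)
    then show ?thesis by (simp add: add.commute lessThan_atLeast0)
  qed
  finally show ?case using Suc by simp
qed

lemma split_sum3: "(\<Sum>i<k*m*n. f i) = (\<Sum>p<k. \<Sum>c<(m::nat). \<Sum>a<(n::nat). f ((p * m + c) * n + a))"
  by (simp add: split_sum[where m="k*m" and n=n] split_sum[where m=k and n=m])


lemma perm3:
  fixes k m n :: nat
  assumes P: "psd (k*n*m) P" and Qm: "Q \<in> mats (k*m*n)"
    and eq: "\<And>p c a q d b. p < k \<Longrightarrow> c < m \<Longrightarrow> a < n \<Longrightarrow> q < k \<Longrightarrow> d < m \<Longrightarrow> b < n \<Longrightarrow>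
       Q ((p*m+c)*n+a) ((q*m+d)*n+b) = P ((p*n+a)*m+c) ((q*n+b)*m+d)"
  shows "psd (k*m*n) Q"
  unfolding psd_qf
proof (intro conjI allI)
  show "Q \<in> mats (k*m*n)" by (rule Qm)
  fix u :: "nat \<Rightarrow> complex"
  define v where "v i = u (((i div m) div n * m + i mod m) * n + (i div m) mod n)" for i
  have vv: "v ((p*n+a)*m+c) = u ((p*m+c)*n+a)" if "a < n" "c < m" for p a c
    using that by (simp add: v_def)
  define F where "F p a c q b d = cnj (v ((p*n+a)*m+c)) * P ((p*n+a)*m+c) ((q*n+b)*m+d) * v ((q*n+b)*m+d)" for p a c q b d
  have "qf (k*m*n) Q u = (\<Sum>p<k. \<Sum>c<m. \<Sum>a<n. \<Sum>q<k. \<Sum>d<m. \<Sum>b<n.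
      cnj (u ((p*m+c)*n+a)) * Q ((p*m+c)*n+a) ((q*m+d)*n+b) * u ((q*m+d)*n+b))"
    unfolding qf_def split_sum3 ..
  also have "\<dots> = (\<Sum>p<k. \<Sum>c<m. \<Sum>a<n. \<Sum>q<k. \<Sum>d<m. \<Sum>b<n. F p a c q b d)"
    by (intro sum.cong refl) (simp add: F_def vv eq)
  also have "\<dots> = (\<Sum>p<k. \<Sum>a<n. \<Sum>c<m. \<Sum>q<k. \<Sum>b<n. \<Sum>d<m. F p a c q b d)"
  proof -
    have i: "(\<Sum>d<m. \<Sum>b<n. F p a c q b d) = (\<Sum>b<n. \<Sum>d<m. F p a c q b d)" for p a c q
      by (rule sum.swap)
    have o: "(\<Sum>c<m. \<Sum>a<n. G a c) = (\<Sum>a<n. \<Sum>c<m. G a c)" for G :: "nat \<Rightarrow> nat \<Rightarrow> complex"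
      by (rule sum.swap)
    show ?thesis by (simp only: i o)
  qed
  also have "\<dots> = qf (k*n*m) P v"
    unfolding qf_def split_sum3 F_def ..
  finally have "qf (k*m*n) Q u = qf (k*n*m) P v" .
  then show "nnc (qf (k*m*n) Q u)" using P by (simp add: psd_qf)
qed


lemma stensor_apply:
  "stensor V1 W1 V2 W2 \<phi> \<psi> M i j = (if i < W1*W2 \<and> j < W1*W2 then
     (\<Sum>a<V1. \<Sum>b<V1. \<Sum>c<V2. \<Sum>d<V2. M (a*V2+c) (b*V2+d) *
        (\<phi> (unitmat a b) (i div W2) (j div W2) * \<psi> (unitmat c d) (i mod W2) (j mod W2))) else 0)"
proof (cases "i < W1*W2 \<and> j < W1*W2")
  case True then show ?thesis by (simp add: stensor_def sum_fun_apply smul_def kron_def)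
next
  case False
  then have k0: "kron W1 W2 A B i j = 0" for A B by (auto simp: kron_def)
  show ?thesis using False by (auto simp: stensor_def sum_fun_apply smul_def k0)
qed

lemma superop_stensor: "superop (V1*V2) (W1*W2) (stensor V1 W1 V2 W2 \<phi> \<psi>)"
  unfolding superop_def
proof (intro conjI allI)
  fix M show "stensor V1 W1 V2 W2 \<phi> \<psi> M \<in> mats (W1 * W2)"
    by (auto simp: mats_def stensor_apply)
next
  fix M
  have "a * V2 + c < V1 * V2" if "a < V1" "c < V2" for a c using idx_lt[OF that] .
  then show "stensor V1 W1 V2 W2 \<phi> \<psi> M = stensor V1 W1 V2 W2 \<phi> \<psi> (trunc (V1 * V2) M)"
    by (auto simp: fun_eq_iff stensor_apply trunc_def intro!: sum.cong)
next
  fix M N show "stensor V1 W1 V2 W2 \<phi> \<psi> (M + N) = stensor V1 W1 V2 W2 \<phi> \<psi> M + stensor V1 W1 V2 W2 \<phi> \<psi> N"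
    by (auto simp: fun_eq_iff stensor_apply distrib_right sum.distrib)
next
  fix c M show "stensor V1 W1 V2 W2 \<phi> \<psi> (smul c M) = smul c (stensor V1 W1 V2 W2 \<phi> \<psi> M)"
    by (auto simp: fun_eq_iff stensor_apply smul_def sum_distrib_left mult.assoc)
qed

lemma tr_sum: "tr n (sum f A) = (\<Sum>a\<in>A. tr n (f a))"
  unfolding tr_def sum_fun_apply by (rule sum.swap)

lemma tr_smul: "tr n (smul c M) = c * tr n M"
  by (simp add: tr_def smul_def sum_distrib_left)

lemma tr_kron: "tr (n*m) (kron n m A B) = tr n A * tr m B"
  by (simp add: tr_def kron_def split_sum sum_product idx_lt)

lemma unitmat_mats: "a < V \<Longrightarrow> b < V \<Longrightarrow> unitmat a b \<in> mats V"
  by (auto simp: mats_def unitmat_def)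

lemma sum_delta1: "c < (V::nat) \<Longrightarrow> (\<Sum>d<V. g d * (if c = d then 1 else 0)) = (g c :: complex)"
proof -
  assume c: "c < V"
  have "(\<Sum>d<V. g d * (if c = d then 1 else 0)) = (\<Sum>d<V. if c = d then g d else 0)"
    by (rule sum.cong) auto
  also have "\<dots> = g c" using c by (subst sum.delta') auto
  finally show ?thesis .
qed

lemma tr_unitmat: "a < V \<Longrightarrow> b < V \<Longrightarrow> tr V (unitmat a b) = (if a = b then 1 else 0)"
proof -
  assume a: "a < V" "b < V"
  have "tr V (unitmat a b) = (\<Sum>i<V. (if a = i then 1 else 0) * (if b = i then 1 else 0))"
    unfolding tr_def unitmat_def by (rule sum.cong) auto
  also have "\<dots> = (if b = a then 1 else 0)" using sum_delta1[OF a(1), of "\<lambda>i. if b = i then 1 else 0"]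
    by (simp add: mult.commute)
  finally show ?thesis by auto
qed

lemma tr_stensor:
  assumes "channel V1 W1 \<phi>" "channel V2 W2 \<psi>"
  shows "tr (W1*W2) (stensor V1 W1 V2 W2 \<phi> \<psi> M) = tr (V1*V2) M"
proof -
  have t1: "tr W1 (\<phi> (unitmat a b)) = (if a = b then 1 else 0)" if "a < V1" "b < V1" for a b
    using assms(1) unitmat_mats[OF that] tr_unitmat[OF that] by (simp add: channel_def)
  have t2: "tr W2 (\<psi> (unitmat c d)) = (if c = d then 1 else 0)" if "c < V2" "d < V2" for c d
    using assms(2) unitmat_mats[OF that] tr_unitmat[OF that] by (simp add: channel_def)
  have "tr (W1*W2) (stensor V1 W1 V2 W2 \<phi> \<psi> M) = (\<Sum>a<V1. \<Sum>b<V1. \<Sum>c<V2. \<Sum>d<V2.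
      M (a * V2 + c) (b * V2 + d) * (tr W1 (\<phi> (unitmat a b)) * tr W2 (\<psi> (unitmat c d))))"
    by (simp add: stensor_def tr_sum tr_smul tr_kron)
  also have "\<dots> = (\<Sum>a<V1. \<Sum>b<V1. (\<Sum>c<V2. \<Sum>d<V2.
      M (a * V2 + c) (b * V2 + d) * (if c = d then 1 else 0)) * (if a = b then 1 else 0))"
    by (intro sum.cong refl) (simp add: sum_distrib_right t1 t2 mult.assoc)
  also have "\<dots> = (\<Sum>a<V1. \<Sum>c<V2. \<Sum>d<V2. M (a * V2 + c) (a * V2 + d) * (if c = d then 1 else 0))"
  proof (rule sum.cong[OF refl])
    fix a assume "a \<in> {..<V1}"
    then show "(\<Sum>b<V1. (\<Sum>c<V2. \<Sum>d<V2. M (a * V2 + c) (b * V2 + d) * (if c = d then 1 else 0)) * (if a = b then 1 else 0))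
      = (\<Sum>c<V2. \<Sum>d<V2. M (a * V2 + c) (a * V2 + d) * (if c = d then 1 else 0))"
      by (intro sum_delta1[where g="\<lambda>b. \<Sum>c<V2. \<Sum>d<V2. M (a * V2 + c) (b * V2 + d) * (if c = d then 1 else 0)"]) simp
  qed
  also have "\<dots> = (\<Sum>a<V1. \<Sum>c<V2. M (a * V2 + c) (a * V2 + c))"
  proof (intro sum.cong refl)
    fix a c assume "c \<in> {..<V2}"
    then show "(\<Sum>d<V2. M (a * V2 + c) (a * V2 + d) * (if c = d then 1 else 0)) = M (a * V2 + c) (a * V2 + c)"
      by (intro sum_delta1[where g="\<lambda>d. M (a * V2 + c) (a * V2 + d)"]) simp
  qed
  also have "\<dots> = tr (V1*V2) M" by (simp add: tr_def split_sum)
  finally show ?thesis .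
qed


lemma ampl_apply:
  assumes "p < k" "a < W" "q < k" "b < W"
  shows "ampl k V W \<phi> M (p*W+a) (q*W+b) = \<phi> (\<lambda>c d. if c < V \<and> d < V then M (p*V+c) (q*V+d) else 0) a b"
  using assms by (simp add: ampl_def idx_lt cong: if_cong)

lemma ampl_expand:
  assumes "superop V W \<phi>" "p < k" "a < W" "q < k" "b < W"
  shows "ampl k V W \<phi> M (p*W+a) (q*W+b) = (\<Sum>c<V. \<Sum>d<V. M (p*V+c) (q*V+d) * \<phi> (unitmat c d) a b)"
proof -
  have "ampl k V W \<phi> M (p*W+a) (q*W+b) = \<phi> (\<lambda>c d. if c < V \<and> d < V then M (p*V+c) (q*V+d) else 0) a b"
    by (rule ampl_apply[OF assms(2-5)])
  also have "\<dots> = (\<Sum>c<V. \<Sum>d<V. (if c < V \<and> d < V then M (p*V+c) (q*V+d) else 0) * \<phi> (unitmat c d) a b)"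
    by (rule superop_expand[OF assms(1)])
  also have "\<dots> = (\<Sum>c<V. \<Sum>d<V. M (p*V+c) (q*V+d) * \<phi> (unitmat c d) a b)"
    by (intro sum.cong refl) simp
  finally show ?thesis .
qed

lemma ampl_mats: "ampl k V W \<phi> M \<in> mats (k * W)"
  by (simp add: ampl_def mats_def)

lemma CP_stensor:
  assumes c1: "CP V1 W1 \<phi>" and c2: "CP V2 W2 \<psi>"
  shows "CP (V1*V2) (W1*W2) (stensor V1 W1 V2 W2 \<phi> \<psi>)"
  unfolding CP_def
proof (intro conjI allI impI superop_stensor)
  fix k M assume psdM: "psd (k * (V1 * V2)) M"
  have so1: "superop V1 W1 \<phi>" and so2: "superop V2 W2 \<psi>" using c1 c2 by (simp_all add: CP_def)
  have cp1: "\<And>k M. psd (k*V1) M \<Longrightarrow> psd (k*W1) (ampl k V1 W1 \<phi> M)" using c1 by (simp add: CP_def)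
  have cp2: "\<And>k M. psd (k*V2) M \<Longrightarrow> psd (k*W2) (ampl k V2 W2 \<psi> M)" using c2 by (simp add: CP_def)
  define T where "T = ampl (k*V1) V2 W2 \<psi> M"
  have hT: "psd (k*V1*W2) T" unfolding T_def by (rule cp2) (use psdM in \<open>simp add: mult.assoc\<close>)
  define \<sigma> where "\<sigma> i = ((i div V1) div W2 * V1 + i mod V1) * W2 + (i div V1) mod W2" for i
  define T' where "T' = (\<lambda>i j. if i < k*W2*V1 \<and> j < k*W2*V1 then T (\<sigma> i) (\<sigma> j) else 0)"
  have T'eq: "T' ((p*W2+c)*V1+a) ((q*W2+d)*V1+b) = T ((p*V1+a)*W2+c) ((q*V1+b)*W2+d)"
    if "p < k" "c < W2" "a < V1" "q < k" "d < W2" "b < V1" for p c a q d b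
  proof -
    have "(p*W2+c)*V1+a < k*W2*V1" "(q*W2+d)*V1+b < k*W2*V1"
      using that by (simp_all add: idx_lt)
    then show ?thesis using that by (simp add: T'_def \<sigma>_def)
  qed
  have hT': "psd (k*W2*V1) T'"
  proof (rule perm3[OF hT])
    show "T' \<in> mats (k*W2*V1)" by (simp add: T'_def mats_def)
  qed (rule T'eq)
  define B where "B = ampl (k*W2) V1 W1 \<phi> T'"
  have hB: "psd (k*W2*W1) B" unfolding B_def by (rule cp1) (use hT' in simp)
  define A where "A = ampl k (V1*V2) (W1*W2) (stensor V1 W1 V2 W2 \<phi> \<psi>) M"
  have Tval: "T ((p*V1+a)*W2+c) ((q*V1+b)*W2+d) = (\<Sum>c'<V2. \<Sum>d'<V2. M ((p*V1+a)*V2+c') ((q*V1+b)*V2+d') * \<psi> (unitmat c' d') c d)"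
    if "p < k" "c < W2" "a < V1" "q < k" "d < W2" "b < V1" for p c a q d b
    unfolding T_def using that by (intro ampl_expand[OF so2]) (simp_all add: idx_lt)
  have key: "A ((p*W1+\<alpha>)*W2+\<gamma>) ((q*W1+\<beta>)*W2+\<delta>) = B ((p*W2+\<gamma>)*W1+\<alpha>) ((q*W2+\<delta>)*W1+\<beta>)"
    if h: "p < k" "\<gamma> < W2" "\<alpha> < W1" "q < k" "\<delta> < W2" "\<beta> < W1" for p \<gamma> \<alpha> q \<delta> \<beta>
  proof -
    have i1: "(p*W1+\<alpha>)*W2+\<gamma> = p*(W1*W2) + (\<alpha>*W2+\<gamma>)" "(q*W1+\<beta>)*W2+\<delta> = q*(W1*W2) + (\<beta>*W2+\<delta>)"
      by (simp_all add: algebra_simps)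
    have l1: "\<alpha>*W2+\<gamma> < W1*W2" "\<beta>*W2+\<delta> < W1*W2" using h by (simp_all add: idx_lt)
    have "A ((p*W1+\<alpha>)*W2+\<gamma>) ((q*W1+\<beta>)*W2+\<delta>) =
       stensor V1 W1 V2 W2 \<phi> \<psi> (\<lambda>c d. if c < V1*V2 \<and> d < V1*V2 then M (p*(V1*V2)+c) (q*(V1*V2)+d) else 0)
         (\<alpha>*W2+\<gamma>) (\<beta>*W2+\<delta>)"
      unfolding A_def i1 using h l1 by (intro ampl_apply) simp_all
    also have "\<dots> = (\<Sum>a<V1. \<Sum>b<V1. \<Sum>c<V2. \<Sum>d<V2.
        M (p*(V1*V2)+(a*V2+c)) (q*(V1*V2)+(b*V2+d)) * (\<phi> (unitmat a b) \<alpha> \<beta> * \<psi> (unitmat c d) \<gamma> \<delta>))"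
      using h l1 by (simp add: stensor_apply idx_lt)
    also have "\<dots> = (\<Sum>a<V1. \<Sum>b<V1. (\<Sum>c<V2. \<Sum>d<V2.
        M ((p*V1+a)*V2+c) ((q*V1+b)*V2+d) * \<psi> (unitmat c d) \<gamma> \<delta>) * \<phi> (unitmat a b) \<alpha> \<beta>)"
      by (simp add: sum_distrib_left sum_distrib_right algebra_simps)
    also have "\<dots> = (\<Sum>a<V1. \<Sum>b<V1. T' ((p*W2+\<gamma>)*V1+a) ((q*W2+\<delta>)*V1+b) * \<phi> (unitmat a b) \<alpha> \<beta>)"
      using h by (intro sum.cong refl) (simp add: T'eq Tval)
    also have "\<dots> = B ((p*W2+\<gamma>)*W1+\<alpha>) ((q*W2+\<delta>)*W1+\<beta>)"
      unfolding B_def using h by (intro ampl_expand[OF so1, symmetric]) (simp_all add: idx_lt)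
    finally show ?thesis .
  qed
  have "psd (k*W1*W2) A"
  proof (rule perm3[OF hB])
    show "A \<in> mats (k*W1*W2)" unfolding A_def using ampl_mats by (metis mult.assoc)
  qed (rule key)
  then show "psd (k * (W1 * W2)) (ampl k (V1 * V2) (W1 * W2) (stensor V1 W1 V2 W2 \<phi> \<psi>) M)"
    by (simp add: A_def mult.assoc)
qed

lemma channel_stensor:
  assumes "channel V1 W1 \<phi>" "channel V2 W2 \<psi>"
  shows "channel (V1*V2) (W1*W2) (stensor V1 W1 V2 W2 \<phi> \<psi>)"
  using CP_stensor tr_stensor[OF assms] assms by (simp add: channel_def)




lemma Delta0_simps: "simp Delta0 n = UNIV" "face Delta0 n i = (\<lambda>x. ())" "degen Delta0 n i = (\<lambda>x. ())"
  by (simp_all add: Delta0_def)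

lemma sum_unit: "(\<Sum>s | F s \<noteq> 0. F s) = (F () :: 'b::comm_monoid_add)"
proof (cases "F () = 0")
  case True
  then have "{s. F s \<noteq> 0} = {}" by auto
  then show ?thesis using True by simp
next
  case False
  then have "{s. F s \<noteq> 0} = {()}" by auto
  then show ?thesis by simp
qed

lemma push_unit: "push (\<lambda>x. ()) F = (F :: unit \<Rightarrow> sop)"
proof
  fix t :: unit
  have "{s. F s \<noteq> 0 \<and> () = t} = {s. F s \<noteq> 0}" by auto
  then show "push (\<lambda>x. ()) F t = F t" unfolding push_def using sum_unit[of F] by simp
qed

lemma sinst_D0:
  "\<Phi> \<in> sinst V W Delta0 Delta0 \<longleftrightarrow> channel V W (\<Phi> 0 () ()) \<and> (\<forall>n. \<Phi> n = (\<lambda>x y. \<Phi> 0 () ()))"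
proof
  assume a: "\<Phi> \<in> sinst V W Delta0 Delta0"
  have D: "\<forall>n i x. i \<le> n \<and> x \<in> simp Delta0 n \<longrightarrow> \<Phi> (Suc n) (degen Delta0 n i x) = push (degen Delta0 n i) (\<Phi> n x)"
    using a unfolding sinst_def mem_Collect_eq by (elim conjE) assumption
  have step: "\<Phi> (Suc n) () = \<Phi> n ()" for n
    using D[rule_format, of 0 n "()"] by (simp add: Delta0_simps push_unit)
  have all: "\<Phi> n () = \<Phi> 0 ()" for n by (induct n) (simp_all add: step)
  have "\<Phi> 0 () \<in> CPfam V W (simp Delta0 0)" using a by (simp add: sinst_def Delta0_simps)
  then have "channel V W (\<Sum>s | \<Phi> 0 () s \<noteq> 0. \<Phi> 0 () s)" by (simp add: CPfam_def)
  then have "channel V W (\<Phi> 0 () ())" by (simp only: sum_unit)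
  moreover have "\<forall>n. \<Phi> n = (\<lambda>x y. \<Phi> 0 () ())"
  proof
    fix n show "\<Phi> n = (\<lambda>x y. \<Phi> 0 () ())"
    proof (rule ext, rule ext)
      fix x y :: unit show "\<Phi> n x y = \<Phi> 0 () ()" using all[of n] by simp
    qed
  qed
  ultimately show "channel V W (\<Phi> 0 () ()) \<and> (\<forall>n. \<Phi> n = (\<lambda>x y. \<Phi> 0 () ()))" by blast
next
  assume a: "channel V W (\<Phi> 0 () ()) \<and> (\<forall>n. \<Phi> n = (\<lambda>x y. \<Phi> 0 () ()))"
  define c where "c = \<Phi> 0 () ()"
  have ch: "channel V W c" and P: "\<And>n. \<Phi> n = (\<lambda>x y. c)" using a by (simp_all add: c_def)
  have cp: "CP V W c" using ch by (simp add: channel_def)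
  show "\<Phi> \<in> sinst V W Delta0 Delta0"
    unfolding sinst_def mem_Collect_eq
  proof (intro conjI allI impI)
    fix n show "\<Phi> n \<in> extensional (simp Delta0 n)" by (simp add: Delta0_simps)
  next
    fix n x show "\<Phi> n x \<in> CPfam V W (simp Delta0 n)"
      unfolding P Delta0_simps CPfam_def mem_Collect_eq using cp sum_unit[of "\<lambda>y::unit. c"] ch by simp
  next
    fix n i x show "\<Phi> (n - 1) (face Delta0 n i x) = push (face Delta0 n i) (\<Phi> n x)"
      unfolding P Delta0_simps push_unit ..
  next
    fix n i x show "\<Phi> (Suc n) (degen Delta0 n i x) = push (degen Delta0 n i) (\<Phi> n x)"
      unfolding P Delta0_simps push_unit ..
  qed
qed


lemma part1: "bij_betw chan_of (sinst V W Delta0 Delta0) {\<Phi>. channel V W \<Phi>}"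
proof (rule bij_betw_byWitness[where f' = "\<lambda>c n x y. c"])
  show "\<forall>\<Phi>\<in>sinst V W Delta0 Delta0. (\<lambda>n x y. chan_of \<Phi>) = \<Phi>"
  proof
    fix \<Phi> assume "\<Phi> \<in> sinst V W Delta0 Delta0"
    then have "\<forall>n. \<Phi> n = (\<lambda>x y. \<Phi> 0 () ())" unfolding sinst_D0 by (rule conjunct2)
    then show "(\<lambda>n x y. chan_of \<Phi>) = \<Phi>"
    proof -
      assume H: "\<forall>n. \<Phi> n = (\<lambda>x y. \<Phi> 0 () ())"
      show ?thesis
      proof (rule ext)
        fix n show "(\<lambda>x y. chan_of \<Phi>) = \<Phi> n" unfolding chan_of_def by (rule sym, rule H[rule_format])
      qed
    qed
  qed
  show "\<forall>c\<in>{\<Phi>. channel V W \<Phi>}. chan_of (\<lambda>n x y. c) = c" by (simp add: chan_of_def)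
  show "chan_of ` sinst V W Delta0 Delta0 \<subseteq> {\<Phi>. channel V W \<Phi>}"
  proof
    fix c assume "c \<in> chan_of ` sinst V W Delta0 Delta0"
    then obtain \<Phi> where "\<Phi> \<in> sinst V W Delta0 Delta0" "c = chan_of \<Phi>" by blast
    then have "channel V W (\<Phi> 0 () ())" "c = chan_of \<Phi>" unfolding sinst_D0 by (blast dest: conjunct1)+
    then show "c \<in> {\<Phi>. channel V W \<Phi>}" by (simp add: chan_of_def)
  qed
  show "(\<lambda>c n x y. c) ` {\<Phi>. channel V W \<Phi>} \<subseteq> sinst V W Delta0 Delta0"
  proof
    fix \<Phi> :: "nat \<Rightarrow> unit \<Rightarrow> unit \<Rightarrow> sop" assume "\<Phi> \<in> (\<lambda>c n x y. c) ` {\<Phi>. channel V W \<Phi>}"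
    then obtain c where "channel V W c" "\<Phi> = (\<lambda>n x y. c)" by blast
    then show "\<Phi> \<in> sinst V W Delta0 Delta0" unfolding sinst_D0 by simp
  qed
qed

lemma part2:
  "hcomp Delta0 Delta0 \<Phi> \<Psi> 0 ((), ()) ((), ()) = chan_of \<Psi> \<circ> chan_of \<Phi>"
  by (simp add: hcomp_def Delta0_simps chan_of_def)

lemma channel_trunc: "channel V V (trunc V)"
proof -
  have so: "superop V V (trunc V)"
    by (auto simp: superop_def trunc_def mats_def smul_def fun_eq_iff)
  have am: "ampl k V V (trunc V) M = M" if "M \<in> mats (k*V)" for k M
  proof (rule ext, rule ext)
    fix i j
    show "ampl k V V (trunc V) M i j = M i j"
    proof (cases "i < k*V \<and> j < k*V")
      case True
      then have "0 < V" by (cases V) auto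
      then have "i mod V < V" "j mod V < V" by simp_all
      then show ?thesis using True by (simp add: ampl_def trunc_def)
    next
      case False then show ?thesis using that by (auto simp: ampl_def mats_def)
    qed
  qed
  have "CP V V (trunc V)" unfolding CP_def
  proof (intro conjI allI impI so)
    fix k M assume p: "psd (k * V) M"
    then have "M \<in> mats (k*V)" by (simp add: psd_qf)
    then show "psd (k * V) (ampl k V V (trunc V) M)" using p by (simp only: am)
  qed
  moreover have "tr V (trunc V M) = tr V M" for M by (simp add: tr_def trunc_def)
  ultimately show ?thesis by (simp add: channel_def)
qed

lemma part3: "hid V \<in> sinst V V Delta0 Delta0 \<and> chan_of (hid V) = trunc V"
  by (simp add: sinst_D0 hid_def chan_of_def channel_trunc)

lemma stensor_zero: "stensor V1 W1 V2 W2 0 \<psi> = 0"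
  by (auto simp: fun_eq_iff stensor_apply)

lemma part4:
  assumes "\<Phi> \<in> sinst V1 W1 Delta0 Delta0" "\<Psi> \<in> sinst V2 W2 Delta0 Delta0"
  shows "vcomp V1 W1 V2 W2 Delta0 \<Phi> \<Psi> \<in> sinst (V1 * V2) (W1 * W2) Delta0 Delta0 \<and>
      chan_of (vcomp V1 W1 V2 W2 Delta0 \<Phi> \<Psi>) = stensor V1 W1 V2 W2 (chan_of \<Phi>) (chan_of \<Psi>)"
proof -
  define \<phi> where "\<phi> = \<Phi> 0 () ()"
  define \<psi> where "\<psi> = \<Psi> 0 () ()"
  have c1: "channel V1 W1 \<phi>" and P: "\<And>n. \<Phi> n = (\<lambda>x y. \<phi>)"
    using assms(1) unfolding sinst_D0 \<phi>_def by blast+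
  have c2: "channel V2 W2 \<psi>" and Q: "\<And>n. \<Psi> n = (\<lambda>x y. \<psi>)"
    using assms(2) unfolding sinst_D0 \<psi>_def by blast+
  have e: "vcomp V1 W1 V2 W2 Delta0 \<Phi> \<Psi> = (\<lambda>n x z. stensor V1 W1 V2 W2 \<phi> \<psi>)"
  proof (rule ext, rule ext, rule ext)
    fix n x z
    show "vcomp V1 W1 V2 W2 Delta0 \<Phi> \<Psi> n x z = stensor V1 W1 V2 W2 \<phi> \<psi>"
    proof (cases "\<phi> = 0")
      case True
      then have "{y::unit. \<phi> \<noteq> 0} = {}" by simp
      then show ?thesis using True by (simp add: vcomp_def Delta0_simps P Q stensor_zero)
    next
      case False
      then have "{y::unit. \<phi> \<noteq> 0} = {()}" by auto
      then show ?thesis by (simp add: vcomp_def Delta0_simps P Q)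
    qed
  qed
  have ch: "channel (V1*V2) (W1*W2) (stensor V1 W1 V2 W2 \<phi> \<psi>)" by (rule channel_stensor[OF c1 c2])
  show ?thesis unfolding e using ch by (simp add: sinst_D0 chan_of_def \<phi>_def \<psi>_def)
qed


theorem proposition6p5:
  shows
  \<comment> \<open>H(sInst) = (Chan, (x), C)\<close>
  "(\<forall>V W. bij_betw chan_of (sinst V W Delta0 Delta0) {\<Phi>. channel V W \<Phi>}) \<and>
   (\<forall>V W U \<Phi> \<Psi>. \<Phi> \<in> sinst V W Delta0 Delta0 \<longrightarrow> \<Psi> \<in> sinst W U Delta0 Delta0 \<longrightarrow>
      hcomp Delta0 Delta0 \<Phi> \<Psi> 0 ((), ()) ((), ()) = chan_of \<Psi> \<circ> chan_of \<Phi>) \<and>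
   (\<forall>V. hid V \<in> sinst V V Delta0 Delta0 \<and> chan_of (hid V) = trunc V) \<and>
   (\<forall>V1 W1 V2 W2 \<Phi> \<Psi>. \<Phi> \<in> sinst V1 W1 Delta0 Delta0 \<longrightarrow> \<Psi> \<in> sinst V2 W2 Delta0 Delta0 \<longrightarrow>
      vcomp V1 W1 V2 W2 Delta0 \<Phi> \<Psi> \<in> sinst (V1 * V2) (W1 * W2) Delta0 Delta0 \<and>
      chan_of (vcomp V1 W1 V2 W2 Delta0 \<Phi> \<Psi>) = stensor V1 W1 V2 W2 (chan_of \<Phi>) (chan_of \<Psi>)) \<and>
   \<comment> \<open>V(sInst) = sSet_D\<close>
   (\<forall>(X :: 'a sset) (Y :: 'b sset). is_sset X \<longrightarrow> is_sset Y \<longrightarrow>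
      bij_betw (dist_of X) (sinst 1 1 X Y) (kmaps X Y)) \<and>
   (\<forall>(X :: 'a sset) (Y :: 'b sset) (Z :: 'c sset) \<Phi> \<Psi>.
      is_sset X \<longrightarrow> is_sset Y \<longrightarrow> is_sset Z \<longrightarrow>
      \<Phi> \<in> sinst 1 1 X Y \<longrightarrow> \<Psi> \<in> sinst 1 1 Y Z \<longrightarrow>
      vcomp 1 1 1 1 X \<Phi> \<Psi> \<in> sinst 1 1 X Z \<and>
      dist_of X (vcomp 1 1 1 1 X \<Phi> \<Psi>) = kcomp X (dist_of X \<Phi>) (dist_of Y \<Psi>)) \<and>
   (\<forall>X :: 'a sset. is_sset X \<longrightarrow> vid X \<in> sinst 1 1 X X \<and> dist_of X (vid X) = kid X) \<and>
   (\<forall>(X1 :: 'a sset) (Y1 :: 'b sset) (X2 :: 'c sset) (Y2 :: 'd sset) \<Phi> \<Psi>.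
      is_sset X1 \<longrightarrow> is_sset Y1 \<longrightarrow> is_sset X2 \<longrightarrow> is_sset Y2 \<longrightarrow>
      \<Phi> \<in> sinst 1 1 X1 Y1 \<longrightarrow> \<Psi> \<in> sinst 1 1 X2 Y2 \<longrightarrow>
      hcomp X1 X2 \<Phi> \<Psi> \<in> sinst 1 1 (sprod X1 X2) (sprod Y1 Y2) \<and>
      dist_of (sprod X1 X2) (hcomp X1 X2 \<Phi> \<Psi>) = kprod X1 X2 (dist_of X1 \<Phi>) (dist_of X2 \<Psi>))"
    apply (intro conjI allI impI)
  subgoal by (rule part1)
  subgoal by (rule part2)
  subgoal by (rule part3[THEN conjunct1])
  subgoal by (rule part3[THEN conjunct2])
  subgoal by (rule part4[THEN conjunct1]) assumption+
  subgoal by (rule part4[THEN conjunct2]) assumption+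
  subgoal by (rule part5) assumption
  subgoal by (rule part6[THEN conjunct1]) assumption+
  subgoal by (rule part6[THEN conjunct2]) assumption+
  subgoal by (rule part7[THEN conjunct1]) assumption
  subgoal by (rule part7[THEN conjunct2]) assumption
  subgoal by (rule part8[THEN conjunct1]) assumption+
  subgoal by (rule part8[THEN conjunct2]) assumption+
  done

end
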